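(* 3D version. Let the environment be a finite union of pairwise disjoint smooth surfaces in $\mathbb{R}^3$ whose principal curvatures are bounded in absolute value by $\kappa\ge0$. Let $a_1,\dots,a_N$ be distinct points on these surfaces, and let $n_i$ be a unit normal to the surface at $a_i$. For $x=(x_R,x_T)\in\mathbb{R}^3\times\mathbb{R}^3$, let $d_i(x):=x_R\times a_i+x_T$ (cross product). Let $\pi(x,i)$ be an index $j$ minimizing $\|a_i+d_i(x)-a_j\|$; note $\pi(0,i)=i$. Fix $x$ and $i$, and let $j=\pi(x,i)$. Assume the following: - $a_i$ and $a_j$ lie on the same surface $S$; - the intersection of $S$ with the plane through $a_i$ spanned by $n_i$ and $a_j-a_i$ contains a $C^2$ arc-length-parametrized curve $\gamma$ with $a_i=\gamma(s_i)$ and $a_j=\gamma(s_j)$; - $\kappa\,|s_i-s_j|\le1$. Then $\psi_i:=(a_i-a_j)\cdot n_i$ satisfies $$(a_i+d_i(x)-a_{\pi(x,i)})\cdot n_i=d_i(x)\cdot n_i+\psi_i,\qquad |\psi_i|\le 8\kappa\|d_i(x)\|^2 .$$ Consequently, suppose these hypotheses hold for every $i$. Then the point-to-plane ICP cost $J_{\mathrm{ICP}}(x):=\sum_i[(a_i+d_i(x)-a_{\pi(x,i)})\cdot n_i]^2$ and the frozen-matching quadratic cost $J_{\mathrm{fix}}(x):=\sum_i(d_i(x)\cdot n_i)^2$ satisfy $$|J_{\mathrm{ICP}}(x)-J_{\mathrm{fix}}(x)|\le\sum_i\big(16\kappa\|d_i(x)\|^3+64\kappa^2\|d_i(x)\|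^4\big)=O(\kappa\|x\|^3).$$
   Context: The cost $J_{\mathrm{fix}}$ is the point-to-plane ICP cost with matching held fixed at its value $\pi(0,\cdot)$ at the minimum $x=0$. It is a quadratic form in $x$, equal to its own second-order Taylor expansion at $0$. "Principal curvatures" refers to the (Gauss) principal curvatures of the surface. *)

theory Defs
  imports "HOL-Analysis.Analysis"
begin

fun Ck_on :: "nat \<Rightarrow> ('a::euclidean_space \<Rightarrow> real) \<Rightarrow> 'a set \<Rightarrow> bool" where
  "Ck_on 0 f U = continuous_on U f"
| "Ck_on (Suc k) f U =
     (\<exists>f'. (\<forall>y\<in>U. (f has_derivative f' y) (at y)) \<and> (\<forall>v. Ck_on k (\<lambda>y. f' y v) U))"

definition smooth_on :: "('a::euclidean_space \<Rightarrow> real) \<Rightarrow> 'a set \<Rightarrow> bool" where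
  "smooth_on f U \<longleftrightarrow> (\<forall>k. Ck_on k f U)"

definition local_defining ::
  "(real^3) set \<Rightarrow> real^3 \<Rightarrow> (real^3) set \<Rightarrow> (real^3 \<Rightarrow> real) \<Rightarrow> (real^3 \<Rightarrow> real^3) \<Rightarrow> bool" where
  "local_defining S p U F G \<longleftrightarrow>
     open U \<and> p \<in> U \<and> smooth_on F U \<and>
     (\<forall>y\<in>U. (F has_derivative (\<lambda>v. G y \<bullet> v)) (at y) \<and> G y \<noteq> 0) \<and>
     S \<inter> U = {y\<in>U. F y = 0}"

definition smooth_surface :: "(real^3) set \<Rightarrow> bool" where
  "smooth_surface S \<longleftrightarrow> (\<forall>p\<in>S. \<exists>U F G. local_defining S p U F G)"

definition unit_normal :: "(real^3) set \<Rightarrow> real^3 \<Rightarrow> real^3 \<Rightarrow> bool" where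
  "unit_normal S p nv \<longleftrightarrow> p \<in> S \<and> norm nv = 1 \<and>
     (\<exists>U F G. local_defining S p U F G \<and> (\<forall>v. G p \<bullet> v = 0 \<longrightarrow> nv \<bullet> v = 0))"

text \<open>Principal curvatures at p: eigenvalues of the shape operator, i.e. of the
  differential of the Gauss map N = G / |G| restricted to the tangent plane
  (shape operator = - dN).\<close>

definition principal_curvature :: "(real^3 \<Rightarrow> real^3) \<Rightarrow> real^3 \<Rightarrow> real \<Rightarrow> bool" where
  "principal_curvature G p k \<longleftrightarrow>
     (\<exists>DN v. ((\<lambda>y. (1 / norm (G y)) *\<^sub>R G y) has_derivative DN) (at p) \<and>
            v \<noteq> 0 \<and> G p \<bullet> v = 0 \<and> DN v = - (k *\<^sub>R v))"

definition curvature_bounded :: "(real^3) set \<Rightarrow> real \<Rightarrow> bool" where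
  "curvature_bounded S \<kappa> \<longleftrightarrow>
     (\<forall>p\<in>S. \<forall>U F G k. local_defining S p U F G \<longrightarrow> principal_curvature G p k \<longrightarrow> \<bar>k\<bar> \<le> \<kappa>)"

definition icp_d :: "(real^3) \<times> (real^3) \<Rightarrow> real^3 \<Rightarrow> real^3" where
  "icp_d x p = cross3 (fst x) p + snd x"

definition arc_hyp :: "(real^3) set \<Rightarrow> real \<Rightarrow> real^3 \<Rightarrow> real^3 \<Rightarrow> real^3 \<Rightarrow> bool" where
  "arc_hyp S \<kappa> p q nv \<longleftrightarrow>
     (\<exists>(\<gamma>::real \<Rightarrow> real^3) \<gamma>' \<gamma>'' si sj.
        (let I = {min si sj .. max si sj} in
          (\<forall>t\<in>I. (\<gamma> has_vector_derivative \<gamma>' t) (at t within I) \<and>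
                  (\<gamma>' has_vector_derivative \<gamma>'' t) (at t within I) \<and>
                  norm (\<gamma>' t) = 1) \<and>
          continuous_on I \<gamma>'' \<and>
          \<gamma> ` I \<subseteq> S \<inter> {p + u *\<^sub>R nv + w *\<^sub>R (q - p) | u w. True}) \<and>
        \<gamma> si = p \<and> \<gamma> sj = q \<and> \<kappa> * \<bar>si - sj\<bar> \<le> 1)"

definition J_ICP :: "nat \<Rightarrow> (nat \<Rightarrow> real^3) \<Rightarrow> (nat \<Rightarrow> real^3) \<Rightarrow>
    ((real^3) \<times> (real^3) \<Rightarrow> nat \<Rightarrow> nat) \<Rightarrow> (real^3) \<times> (real^3) \<Rightarrow> real" where
  "J_ICP N a n \<pi> x = (\<Sum>i=1..N. ((a i + icp_d x (a i) - a (\<pi> x i)) \<bullet> n i)\<^sup>2)"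

definition J_fix :: "nat \<Rightarrow> (nat \<Rightarrow> real^3) \<Rightarrow> (nat \<Rightarrow> real^3) \<Rightarrow> (real^3) \<times> (real^3) \<Rightarrow> real" where
  "J_fix N a n x = (\<Sum>i=1..N. (icp_d x (a i) \<bullet> n i)\<^sup>2)"

end

theory Submission
  imports Defs
begin

unbundle cross3_syntax

lemma frame_expand:
  fixes n e w :: "real^3"
  assumes "norm n = 1" "norm e = 1" "n \<bullet> e = 0"
  shows "w = (w \<bullet> n) *\<^sub>R n + (w \<bullet> e) *\<^sub>R e + (w \<bullet> (n \<times> e)) *\<^sub>R (n \<times> e)"
proof -
  let ?c = "n \<times> e"
  have nn: "n \<bullet> n = 1" using assms by (simp add: dot_square_norm)
  have ee: "e \<bullet> e = 1" using assms by (simp add: dot_square_norm)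
  have "(norm ?c)\<^sup>2 = 1" using norm_cross_dot[of n e] assms by simp
  then have cc: "?c \<bullet> ?c = 1" by (simp add: dot_square_norm)
  define r where "r = w - (w \<bullet> n) *\<^sub>R n - (w \<bullet> e) *\<^sub>R e"
  have rn: "r \<bullet> n = 0" unfolding r_def using nn assms(3)
    by (simp add: inner_diff_left inner_diff_right inner_commute)
  have re: "r \<bullet> e = 0" unfolding r_def using ee assms(3)
    by (simp add: inner_diff_left inner_diff_right inner_commute)
  have rc: "?c \<bullet> r = ?c \<bullet> w" unfolding r_def
    by (simp add: inner_diff_right dot_cross_self)
  have "r = (w \<bullet> ?c) *\<^sub>R ?c"
  proof (rule cross_dot_cancel[of ?c])
    show "?c \<noteq> 0" using cc by auto
    show "?c \<bullet> r = ?c \<bullet> ((w \<bullet> ?c) *\<^sub>R ?c)" using rc cc by (simp add: inner_commute)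
    have "?c \<times> r = - (r \<times> ?c)" by (rule cross_skew)
    also have "r \<times> ?c = 0" using Lagrange[of r n e] rn re by (simp add: inner_commute)
    finally show "?c \<times> r = ?c \<times> ((w \<bullet> ?c) *\<^sub>R ?c)" by (simp add: cross_mult_right)
  qed
  then show ?thesis unfolding r_def by (simp add: algebra_simps)
qed

lemma exists_unit_orth:
  fixes g :: "real^3"
  assumes "g \<noteq> 0"
  obtains t where "norm t = 1" "g \<bullet> t = 0"
proof -
  have "\<exists>u. u \<noteq> 0 \<and> g \<bullet> u = 0"
  proof (cases "g \<times> axis 1 1 = 0")
    case True
    have "g \<times> axis 2 1 \<noteq> 0"
    proof
      assume h: "g \<times> axis 2 1 = 0"
      have c1: "(g \<times> axis 1 1)$2 = g$3" "(g \<times> axis 1 1)$3 = - g$2" "(g \<times> axis 2 1)$3 = g$1"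
        by (simp_all add: cross_components axis_def)
      have "g $ 1 = 0" "g $ 2 = 0" "g $ 3 = 0" using c1 True h by simp_all
      then have "g = 0" by (simp add: vec_eq_iff forall_3)
      then show False using assms by simp
    qed
    then show ?thesis using dot_cross_self(1) by blast
  next
    case False
    then show ?thesis using dot_cross_self(1) by blast
  qed
  then obtain u where u: "u \<noteq> 0" "g \<bullet> u = 0" by blast
  show ?thesis
    by (rule that[of "u /\<^sub>R norm u"]) (use u in auto)
qed

lemma sym_bound:
  fixes g :: "real^3" and A :: "real^3 \<Rightarrow> real^3" and K :: real
  assumes g: "g \<noteq> 0" and lin: "linear A"
    and inv: "\<And>v. g \<bullet> v = 0 \<Longrightarrow> g \<bullet> A v = 0"
    and sym: "\<And>v w. g \<bullet> v = 0 \<Longrightarrow> g \<bullet> w = 0 \<Longrightarrow> A v \<bullet> w = A w \<bullet> v"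
    and eig: "\<And>v k. v \<noteq> 0 \<Longrightarrow> g \<bullet> v = 0 \<Longrightarrow> A v = k *\<^sub>R v \<Longrightarrow> \<bar>k\<bar> \<le> K"
    and v: "g \<bullet> v = 0"
  shows "norm (A v) \<le> K * norm v"
proof -
  obtain t1 where t1: "norm t1 = 1" "g \<bullet> t1 = 0" using exists_unit_orth[OF g] by blast
  define n0 where "n0 = g /\<^sub>R norm g"
  have n0: "norm n0 = 1" "n0 \<bullet> t1 = 0" using g t1 by (auto simp: n0_def)
  define t2 where "t2 = n0 \<times> t1"
  have "(norm t2)\<^sup>2 = 1" using norm_cross_dot[of n0 t1] n0 t1 by (simp add: t2_def)
  then have t22: "t2 \<bullet> t2 = 1" by (simp add: dot_square_norm)
  have t11: "t1 \<bullet> t1 = 1" using t1 by (simp add: dot_square_norm)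
  have t12: "t1 \<bullet> t2 = 0" "t2 \<bullet> t1 = 0" by (simp_all add: t2_def dot_cross_self)
  have gt2: "g \<bullet> t2 = 0"
  proof -
    have "n0 \<bullet> t2 = 0" by (simp add: t2_def dot_cross_self)
    then show ?thesis using g by (simp add: n0_def)
  qed
  have expand: "w = (w \<bullet> t1) *\<^sub>R t1 + (w \<bullet> t2) *\<^sub>R t2" if "g \<bullet> w = 0" for w
  proof -
    have "n0 \<bullet> w = 0" using that by (simp add: n0_def)
    then show ?thesis using frame_expand[OF n0(1) t1(1) n0(2), of w] by (simp add: t2_def inner_commute)
  qed
  define \<alpha> where "\<alpha> = A t1 \<bullet> t1"
  define \<beta> where "\<beta> = A t1 \<bullet> t2"
  define \<gamma> where "\<gamma> = A t2 \<bullet> t2"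
  have b2: "A t2 \<bullet> t1 = \<beta>" using sym[OF gt2 t1(2)] by (simp add: \<beta>_def)
  have At1: "A t1 = \<alpha> *\<^sub>R t1 + \<beta> *\<^sub>R t2" using expand[OF inv[OF t1(2)]] by (simp add: \<alpha>_def \<beta>_def)
  have At2: "A t2 = \<beta> *\<^sub>R t1 + \<gamma> *\<^sub>R t2" using expand[OF inv[OF gt2]] b2 by (simp add: \<gamma>_def)
  have Acomb: "A (x *\<^sub>R t1 + y *\<^sub>R t2) = (x * \<alpha> + y * \<beta>) *\<^sub>R t1 + (x * \<beta> + y * \<gamma>) *\<^sub>R t2" for x y
    using At1 At2 by (simp add: linear_add[OF lin] linear_scale[OF lin] algebra_simps)
  have nrm2: "(norm (a *\<^sub>R t1 + b *\<^sub>R t2))\<^sup>2 = a\<^sup>2 + b\<^sup>2" for a b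
    unfolding power2_norm_eq_inner by (simp add: inner_add_left inner_add_right t11 t22 t12 power2_eq_square)
  have tang: "g \<bullet> (a *\<^sub>R t1 + b *\<^sub>R t2) = 0" for a b
    by (simp add: inner_add_right t1 gt2)
  define d where "d = (\<alpha> - \<gamma>) / 2"
  define m where "m = (\<alpha> + \<gamma>) / 2"
  define r where "r = sqrt (d\<^sup>2 + \<beta>\<^sup>2)"
  have r0: "r \<ge> 0" by (simp add: r_def)
  have rsq: "r\<^sup>2 = d\<^sup>2 + \<beta>\<^sup>2" by (simp add: r_def)
  have eigs: "\<bar>m + r\<bar> \<le> K \<and> \<bar>m - r\<bar> \<le> K"
  proof (cases "\<beta> = 0")
    case True
    have a: "\<bar>\<alpha>\<bar> \<le> K"
    proof -
      have "t1 \<noteq> 0" using t1(1) by auto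
      then show ?thesis using eig[of t1 \<alpha>] t1(2) At1 True by auto
    qed
    have c: "\<bar>\<gamma>\<bar> \<le> K"
    proof -
      have "t2 \<noteq> 0" using t22 by auto
      then show ?thesis using eig[of t2 \<gamma>] gt2 At2 True by auto
    qed
    have "r = \<bar>d\<bar>" using True by (simp add: r_def)
    then show ?thesis using a c unfolding m_def d_def by argo
  next
    case False
    have ev: "\<bar>lam\<bar> \<le> K" if "(lam - \<alpha>) * (lam - \<gamma>) = \<beta>\<^sup>2" for lam
    proof -
      let ?v = "\<beta> *\<^sub>R t1 + (lam - \<alpha>) *\<^sub>R t2"
      have "?v \<noteq> 0"
      proof
        assume "?v = 0"
        then have "?v \<bullet> t1 = 0" by simp
        then show False using False by (simp add: inner_add_left t11 t12)
      qed
      moreover have "A ?v = lam *\<^sub>R ?v"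
      proof -
        have "A ?v = (\<beta> * \<alpha> + (lam - \<alpha>) * \<beta>) *\<^sub>R t1 + (\<beta> * \<beta> + (lam - \<alpha>) * \<gamma>) *\<^sub>R t2"
          by (rule Acomb)
        also have "\<beta> * \<beta> + (lam - \<alpha>) * \<gamma> = lam * (lam - \<alpha>)"
          using that by (simp add: power2_eq_square algebra_simps)
        finally show ?thesis by (simp add: algebra_simps)
      qed
      ultimately show ?thesis using eig tang by blast
    qed
    have "((m + r) - \<alpha>) * ((m + r) - \<gamma>) = \<beta>\<^sup>2" "((m - r) - \<alpha>) * ((m - r) - \<gamma>) = \<beta>\<^sup>2"
    proof -
      have e1: "(m + r) - \<alpha> = r - d" "(m + r) - \<gamma> = r + d" "(m - r) - \<alpha> = -(r + d)" "(m - r) - \<gamma> = d - r"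
        by (simp_all add: m_def d_def field_simps)
      show "((m + r) - \<alpha>) * ((m + r) - \<gamma>) = \<beta>\<^sup>2" "((m - r) - \<alpha>) * ((m - r) - \<gamma>) = \<beta>\<^sup>2"
        unfolding e1 using rsq by (simp_all add: power2_eq_square algebra_simps)
    qed
    then show ?thesis using ev by blast
  qed
  have K: "\<bar>m\<bar> + r \<le> K" using eigs r0 by (auto simp: abs_if split: if_splits)
  define x where "x = v \<bullet> t1"
  define y where "y = v \<bullet> t2"
  have vx: "v = x *\<^sub>R t1 + y *\<^sub>R t2" using expand[OF v] by (simp add: x_def y_def)
  have nv: "(norm v)\<^sup>2 = x\<^sup>2 + y\<^sup>2" using vx nrm2 by metis
  have nAv: "(norm (A v))\<^sup>2 = (x * \<alpha> + y * \<beta>)\<^sup>2 + (x * \<beta> + y * \<gamma>)\<^sup>2"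
    using vx Acomb nrm2 by metis
  have id: "(x * \<alpha> + y * \<beta>)\<^sup>2 + (x * \<beta> + y * \<gamma>)\<^sup>2
      = (m\<^sup>2 + r\<^sup>2) * (x\<^sup>2 + y\<^sup>2) + 2 * m * (d * (x\<^sup>2 - y\<^sup>2) + 2 * \<beta> * x * y)"
    unfolding rsq m_def d_def by (simp add: power2_eq_square field_simps)
  have cs: "\<bar>d * (x\<^sup>2 - y\<^sup>2) + 2 * \<beta> * x * y\<bar> \<le> r * (x\<^sup>2 + y\<^sup>2)"
  proof -
    have "(d * (x\<^sup>2 - y\<^sup>2) + 2 * \<beta> * x * y)\<^sup>2 \<le> (d\<^sup>2 + \<beta>\<^sup>2) * ((x\<^sup>2 - y\<^sup>2)\<^sup>2 + (2 * x * y)\<^sup>2)"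
    proof -
      have "(d * (x\<^sup>2 - y\<^sup>2) + 2 * \<beta> * x * y)\<^sup>2 + (2 * d * x * y - \<beta> * (x\<^sup>2 - y\<^sup>2))\<^sup>2
          = (d\<^sup>2 + \<beta>\<^sup>2) * ((x\<^sup>2 - y\<^sup>2)\<^sup>2 + (2 * x * y)\<^sup>2)"
        by (simp add: power2_eq_square algebra_simps)
      then show ?thesis by (smt (verit) zero_le_power2)
    qed
    also have "\<dots> = (r * (x\<^sup>2 + y\<^sup>2))\<^sup>2" unfolding power_mult_distrib rsq[symmetric] by (simp add: power2_eq_square algebra_simps)
    finally show ?thesis using r0 by (metis abs_le_square_iff abs_of_nonneg add_nonneg_nonneg mult_nonneg_nonneg zero_le_power2 abs_power2 power2_abs)
  qed
  have "2 * m * (d * (x\<^sup>2 - y\<^sup>2) + 2 * \<beta> * x * y) \<le> 2 * \<bar>m\<bar> * (r * (x\<^sup>2 + y\<^sup>2))"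
  proof -
    have "m * (d * (x\<^sup>2 - y\<^sup>2) + 2 * \<beta> * x * y) \<le> \<bar>m * (d * (x\<^sup>2 - y\<^sup>2) + 2 * \<beta> * x * y)\<bar>" by simp
    also have "\<dots> \<le> \<bar>m\<bar> * (r * (x\<^sup>2 + y\<^sup>2))" unfolding abs_mult by (rule mult_left_mono[OF cs]) simp
    finally show ?thesis by simp
  qed
  then have "(norm (A v))\<^sup>2 \<le> (\<bar>m\<bar> + r)\<^sup>2 * (norm v)\<^sup>2"
    using nAv nv id by (simp add: power2_eq_square algebra_simps)
  also have "\<dots> \<le> (K * norm v)\<^sup>2"
    using K r0 by (simp add: power_mult_distrib mult_right_mono power_mono)
  finally show ?thesis using K r0 by (smt (verit) norm_ge_zero power2_le_imp_le mult_nonneg_nonneg)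
qed


lemma line_deriv:
  fixes f :: "'a::real_normed_vector \<Rightarrow> real"
  assumes "(f has_derivative f') (at (a + s *\<^sub>R v))"
  shows "((\<lambda>s. f (a + s *\<^sub>R v)) has_real_derivative f' v) (at s)"
proof -
  have l: "((\<lambda>s. a + s *\<^sub>R v) has_derivative (\<lambda>t. t *\<^sub>R v)) (at s)"
    using has_derivative_add[OF has_derivative_const[of a] has_derivative_scaleR_left[OF has_derivative_ident, of v]]
    by simp
  have "((\<lambda>s. f (a + s *\<^sub>R v)) has_derivative (\<lambda>t. f' (t *\<^sub>R v))) (at s)"
    using has_derivative_compose[OF l assms] by (simp add: o_def)
  moreover have "linear f'" using assms has_derivative_linear by blast
  then have e: "(\<lambda>t. f' (t *\<^sub>R v)) = (*) (f' v)"
    by (auto simp: fun_eq_iff linear_scale)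
  ultimately show ?thesis unfolding has_field_derivative_def by simp
qed

lemma schwarz:
  fixes F :: "'a::euclidean_space \<Rightarrow> real" and G :: "'a \<Rightarrow> 'a"
  assumes U: "open U" "p \<in> U"
    and dF: "\<And>y. y \<in> U \<Longrightarrow> (F has_derivative (\<lambda>u. G y \<bullet> u)) (at y)"
    and dG: "\<And>y u. y \<in> U \<Longrightarrow> ((\<lambda>z. G z \<bullet> u) has_derivative (\<lambda>w. H y w u)) (at y)"
    and cH: "\<And>w u. continuous_on U (\<lambda>y. H y w u)"
  shows "H p w v = H p v w"
proof -
  obtain r where r: "r > 0" "ball p r \<subseteq> U" using U openE by blast
  define \<Delta> where "\<Delta> h v w = F (p + h *\<^sub>R v + h *\<^sub>R w) - F (p + h *\<^sub>R v) - F (p + h *\<^sub>R w) + F p" for h v w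
  have key: "\<exists>q. dist q p \<le> h * (norm v + norm w) \<and> \<Delta> h v w = h\<^sup>2 * H q w v"
    if h: "h > 0" "h * (norm v + norm w) < r" for h v w
  proof -
    have inU: "p + s *\<^sub>R v + t *\<^sub>R w \<in> U" if "0 \<le> s" "s \<le> h" "0 \<le> t" "t \<le> h" for s t
    proof -
      have "norm (s *\<^sub>R v + t *\<^sub>R w) \<le> s * norm v + t * norm w"
        using norm_triangle_ineq[of "s *\<^sub>R v" "t *\<^sub>R w"] that by simp
      also have "\<dots> \<le> h * (norm v + norm w)"
        using that by (simp add: distrib_left add_mono mult_right_mono)
      finally have "dist (p + s *\<^sub>R v + t *\<^sub>R w) p < r" using h by (simp add: dist_norm)
      then show ?thesis using r by (auto simp: dist_commute)
    qed
    define g where "g s = F ((p + h *\<^sub>R w) + s *\<^sub>R v) - F (p + s *\<^sub>R v)" for s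
    have dg: "DERIV g s :> (G (p + s *\<^sub>R v + h *\<^sub>R w) \<bullet> v - G (p + s *\<^sub>R v) \<bullet> v)"
      if "0 \<le> s" "s \<le> h" for s
    proof -
      have a: "p + h *\<^sub>R w + s *\<^sub>R v \<in> U" using inU[of s h] that h by (simp add: algebra_simps)
      have b: "p + s *\<^sub>R v \<in> U" using inU[of s 0] that h by simp
      show ?thesis unfolding g_def
        using DERIV_diff[OF line_deriv[OF dF[OF a]] line_deriv[of F _ p s v, OF dF[OF b]]]
        by (simp add: algebra_simps)
    qed
    obtain \<xi> where xi: "0 < \<xi>" "\<xi> < h"
      "g h - g 0 = (h - 0) * (G (p + \<xi> *\<^sub>R v + h *\<^sub>R w) \<bullet> v - G (p + \<xi> *\<^sub>R v) \<bullet> v)"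
      using MVT2[OF h(1), of g, OF dg] by auto
    define k where "k t = G ((p + \<xi> *\<^sub>R v) + t *\<^sub>R w) \<bullet> v" for t
    have dk: "DERIV k t :> H (p + \<xi> *\<^sub>R v + t *\<^sub>R w) w v" if "0 \<le> t" "t \<le> h" for t
    proof -
      have a: "p + \<xi> *\<^sub>R v + t *\<^sub>R w \<in> U" using inU[of \<xi> t] that xi by simp
      show ?thesis unfolding k_def using line_deriv[OF dG[OF a]] by simp
    qed
    obtain \<eta> where eta: "0 < \<eta>" "\<eta> < h"
      "k h - k 0 = (h - 0) * H (p + \<xi> *\<^sub>R v + \<eta> *\<^sub>R w) w v"
      using MVT2[OF h(1), of k, OF dk] by auto
    have pp: "p + h *\<^sub>R w + h *\<^sub>R v = p + h *\<^sub>R v + h *\<^sub>R w" by (simp add: algebra_simps)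
    have "\<Delta> h v w = g h - g 0" unfolding \<Delta>_def g_def pp by simp
    also have "\<dots> = h * (k h - k 0)" using xi(3) by (simp add: k_def algebra_simps)
    also have "\<dots> = h\<^sup>2 * H (p + \<xi> *\<^sub>R v + \<eta> *\<^sub>R w) w v" using eta(3) by (simp add: power2_eq_square)
    finally have eq: "\<Delta> h v w = h\<^sup>2 * H (p + \<xi> *\<^sub>R v + \<eta> *\<^sub>R w) w v" .
    have "dist (p + \<xi> *\<^sub>R v + \<eta> *\<^sub>R w) p = norm (\<xi> *\<^sub>R v + \<eta> *\<^sub>R w)" by (simp add: dist_norm)
    also have "\<dots> \<le> \<xi> * norm v + \<eta> * norm w"
      using norm_triangle_ineq[of "\<xi> *\<^sub>R v" "\<eta> *\<^sub>R w"] xi eta by simp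
    also have "\<dots> \<le> h * (norm v + norm w)"
      using xi eta by (simp add: distrib_left add_mono mult_right_mono)
    finally have "dist (p + \<xi> *\<^sub>R v + \<eta> *\<^sub>R w) p \<le> h * (norm v + norm w)" .
    then show ?thesis using eq by blast
  qed
  have symD: "\<Delta> h v w = \<Delta> h w v" for h
    by (simp add: \<Delta>_def add.commute add.left_commute)
  have cont: "\<exists>d>0. \<forall>q. dist q p < d \<longrightarrow> \<bar>H q a b - H p a b\<bar> < e" if "e > 0" for a b e
  proof -
    have "isCont (\<lambda>y. H y a b) p" using cH[of a b] U continuous_on_eq_continuous_at by blast
    then show ?thesis using that unfolding continuous_at_eps_delta by (simp add: dist_real_def)
  qed
  show ?thesis
  proof (rule ccontr)
    assume ne: "H p w v \<noteq> H p v w"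
    define D where "D = \<bar>H p w v - H p v w\<bar>"
    have D: "D > 0" using ne by (simp add: D_def)
    obtain d1 where d1: "d1 > 0" "\<forall>q. dist q p < d1 \<longrightarrow> \<bar>H q w v - H p w v\<bar> < D/3"
      using cont[of "D/3" w v] D by auto
    obtain d2 where d2: "d2 > 0" "\<forall>q. dist q p < d2 \<longrightarrow> \<bar>H q v w - H p v w\<bar> < D/3"
      using cont[of "D/3" v w] D by auto
    define m where "m = min (min d1 d2) r"
    have m: "m > 0" "m \<le> d1" "m \<le> d2" "m \<le> r" using d1 d2 r by (auto simp: m_def)
    define h where "h = m / (2 * (norm v + norm w + 1))"
    have pos: "2 * (norm v + norm w + 1) > 0" by (intro mult_pos_pos add_nonneg_pos add_nonneg_nonneg) auto
    then have hpos: "h > 0" unfolding h_def by (rule divide_pos_pos[OF m(1)])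
    have hlt: "h * (norm v + norm w) < m"
    proof -
      have "h * (norm v + norm w) \<le> h * (norm v + norm w + 1)" using hpos by simp
      also have "\<dots> = m / 2"
      proof -
        have "norm v + norm w + 1 \<noteq> 0" using pos by auto
        then show ?thesis unfolding h_def by (simp add: field_simps)
      qed
      finally show ?thesis using m by simp
    qed
    obtain q1 where q1: "dist q1 p \<le> h * (norm v + norm w)" "\<Delta> h v w = h\<^sup>2 * H q1 w v"
      using key[OF hpos, of v w] hlt m(4) by force
    obtain q2 where q2: "dist q2 p \<le> h * (norm w + norm v)" "\<Delta> h w v = h\<^sup>2 * H q2 v w"
      using key[OF hpos, of w v] hlt m(4) by (force simp: add.commute)
    have "H q1 w v = H q2 v w" using q1(2) q2(2) symD hpos by simp
    moreover have "\<bar>H q1 w v - H p w v\<bar> < D/3" using d1 q1(1) hlt m by (simp add: add.commute)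
    moreover have "\<bar>H q2 v w - H p v w\<bar> < D/3" using d2 q2(1) hlt m by (simp add: add.commute)
    ultimately show False unfolding D_def by argo
  qed
qed


lemma ldD:
  assumes "local_defining S p U F G"
  shows "open U" "p \<in> U" "smooth_on F U"
    "\<And>y. y \<in> U \<Longrightarrow> (F has_derivative (\<lambda>v. G y \<bullet> v)) (at y)"
    "\<And>y. y \<in> U \<Longrightarrow> G y \<noteq> 0" "S \<inter> U = {y\<in>U. F y = 0}"
proof -
  note h = assms[unfolded local_defining_def]
  show "open U" using h by (rule conjunct1)
  show "p \<in> U" using h[THEN conjunct2] by (rule conjunct1)
  show "smooth_on F U" using h[THEN conjunct2, THEN conjunct2] by (rule conjunct1)
  note h4 = h[THEN conjunct2, THEN conjunct2, THEN conjunct2, THEN conjunct1]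
  show "(F has_derivative (\<lambda>v. G y \<bullet> v)) (at y)" if "y \<in> U" for y using bspec[OF h4 that] by (rule conjunct1)
  show "G y \<noteq> 0" if "y \<in> U" for y using bspec[OF h4 that] by (rule conjunct2)
  show "S \<inter> U = {y\<in>U. F y = 0}" using h[THEN conjunct2, THEN conjunct2, THEN conjunct2] by (rule conjunct2)
qed

lemma chart_facts:
  assumes ld: "local_defining S p U F G"
  obtains DG where
    "\<And>y. y \<in> U \<Longrightarrow> (G has_derivative DG y) (at y)"
    "\<And>y v w. y \<in> U \<Longrightarrow> DG y v \<bullet> w = DG y w \<bullet> v"
    "continuous_on U G"
proof -
  note U = ldD(1)[OF ld] and dF = ldD(4)[OF ld]
  have "Ck_on (Suc (Suc 0)) F U" using ldD(3)[OF ld] unfolding smooth_on_def by blast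
  then obtain f' where f': "\<And>y. y \<in> U \<Longrightarrow> (F has_derivative f' y) (at y)"
    and f2ex: "\<And>v. \<exists>f''. (\<forall>y\<in>U. ((\<lambda>y. f' y v) has_derivative f'' y) (at y)) \<and> (\<forall>w. continuous_on U (\<lambda>y. f'' y w))"
    by auto
  obtain f2 where f2: "\<And>v. (\<forall>y\<in>U. ((\<lambda>y. f' y v) has_derivative f2 v y) (at y)) \<and> (\<forall>w. continuous_on U (\<lambda>y. f2 v y w))"
    using choice[of "\<lambda>v f''. (\<forall>y\<in>U. ((\<lambda>y. f' y v) has_derivative f'' y) (at y)) \<and> (\<forall>w. continuous_on U (\<lambda>y. f'' y w))"] f2ex
    by metis
  have feq: "f' y = (\<lambda>v. G y \<bullet> v)" if "y \<in> U" for y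
    using has_derivative_unique[OF f'[OF that] dF[OF that]] .
  have dGv: "((\<lambda>z. G z \<bullet> v) has_derivative f2 v y) (at y)" if "y \<in> U" for y v
    using has_derivative_transform_within_open[OF f2[THEN conjunct1, rule_format, OF that] U that, where g="\<lambda>z. G z \<bullet> v"]
      feq by simp
  have sym: "f2 v y w = f2 w y v" if "y \<in> U" for y v w
  proof (rule schwarz[OF U that dF, of "\<lambda>y w v. f2 v y w"])
    show "((\<lambda>z. G z \<bullet> u) has_derivative (\<lambda>w. f2 u y w)) (at y)" if "y \<in> U" for y u
      using dGv[OF that] by simp
    show "continuous_on U (\<lambda>y. f2 u y w)" for w u using f2 by blast
  qed
  define DG where "DG y w = (\<Sum>b\<in>Basis. f2 b y w *\<^sub>R b)" for y w
  have dG: "(G has_derivative DG y) (at y)" if "y \<in> U" for y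
  proof -
    have "((\<lambda>z. \<Sum>b\<in>Basis. (G z \<bullet> b) *\<^sub>R b) has_derivative (\<lambda>w. \<Sum>b\<in>Basis. f2 b y w *\<^sub>R b)) (at y)"
      by (intro has_derivative_sum has_derivative_scaleR_left dGv[OF that])
    then show ?thesis by (simp add: euclidean_representation DG_def[abs_def])
  qed
  have DGeq: "DG y w \<bullet> v = f2 v y w" if "y \<in> U" for y v w
  proof -
    have "((\<lambda>z. G z \<bullet> v) has_derivative (\<lambda>w. DG y w \<bullet> v)) (at y)"
      using bounded_linear.has_derivative[OF bounded_linear_inner_left dG[OF that]] .
    from has_derivative_unique[OF this dGv[OF that]] show ?thesis by metis
  qed
  show ?thesis
  proof (rule that)
    show "\<And>y. y \<in> U \<Longrightarrow> (G has_derivative DG y) (at y)" by (rule dG)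
    show "\<And>y v w. y \<in> U \<Longrightarrow> DG y v \<bullet> w = DG y w \<bullet> v" using DGeq sym by metis
    show "continuous_on U G"
      using dG has_derivative_continuous continuous_at_imp_continuous_on by blast
  qed
qed

lemma N_deriv:
  fixes G :: "'a::euclidean_space \<Rightarrow> 'a"
  assumes dG: "(G has_derivative DG) (at y)" and g: "G y \<noteq> 0"
  shows "((\<lambda>z. (1 / norm (G z)) *\<^sub>R G z) has_derivative
          (\<lambda>w. (1 / norm (G y)) *\<^sub>R DG w - ((G y \<bullet> DG w) / norm (G y) ^ 3) *\<^sub>R G y)) (at y)"
proof -
  have dn: "((\<lambda>z. norm (G z)) has_derivative (\<lambda>w. sgn (G y) \<bullet> DG w)) (at y)"
    using has_derivative_compose[OF dG has_derivative_norm[OF g]] by (simp add: inner_commute)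
  have ng: "norm (G y) \<noteq> 0" using g by simp
  have di: "((\<lambda>z. inverse (norm (G z))) has_derivative
      (\<lambda>w. - (inverse (norm (G y)) * (sgn (G y) \<bullet> DG w) * inverse (norm (G y))))) (at y)"
    using Deriv.has_derivative_inverse[OF ng dn] .
  have "((\<lambda>z. inverse (norm (G z)) *\<^sub>R G z) has_derivative
      (\<lambda>w. inverse (norm (G y)) *\<^sub>R DG w + (- (inverse (norm (G y)) * (sgn (G y) \<bullet> DG w) * inverse (norm (G y)))) *\<^sub>R G y)) (at y)"
    using has_derivative_scaleR[OF di dG] .
  moreover have "(\<lambda>w. inverse (norm (G y)) *\<^sub>R DG w + (- (inverse (norm (G y)) * (sgn (G y) \<bullet> DG w) * inverse (norm (G y)))) *\<^sub>R G y)
     = (\<lambda>w. (1 / norm (G y)) *\<^sub>R DG w - ((G y \<bullet> DG w) / norm (G y) ^ 3) *\<^sub>R G y)"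
    using ng by (auto simp: fun_eq_iff sgn_div_norm inner_commute field_simps power3_eq_cube)
  ultimately show ?thesis by (simp add: divide_inverse)
qed

lemma local_defining_move:
  "local_defining S p U F G \<Longrightarrow> y \<in> U \<Longrightarrow> local_defining S y U F G"
  unfolding local_defining_def by (elim conjE, intro conjI, assumption+)

definition unitN :: "(real^3 \<Rightarrow> real^3) \<Rightarrow> real^3 \<Rightarrow> real^3" where
  "unitN G z = (1 / norm (G z)) *\<^sub>R G z"

lemma DN_bound:
  assumes ld: "local_defining S p U F G" and cb: "curvature_bounded S \<kappa>"
    and y: "y \<in> S" "y \<in> U"
  obtains A where "(unitN G has_derivative A) (at y)" "\<And>v. G y \<bullet> v = 0 \<Longrightarrow> norm (A v) \<le> \<kappa> * norm v"
proof -
  obtain DG where dG: "\<And>y. y \<in> U \<Longrightarrow> (G has_derivative DG y) (at y)"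
    and sym: "\<And>y v w. y \<in> U \<Longrightarrow> DG y v \<bullet> w = DG y w \<bullet> v"
    and "continuous_on U G"
    using chart_facts[OF ld] by metis
  have ldy: "local_defining S y U F G" using local_defining_move[OF ld y(2)] .
  have g: "G y \<noteq> 0" using ldD(5)[OF ld y(2)] .
  define A where "A w = (1 / norm (G y)) *\<^sub>R DG y w - ((G y \<bullet> DG y w) / norm (G y) ^ 3) *\<^sub>R G y" for w
  have dN: "(unitN G has_derivative A) (at y)"
    unfolding unitN_def[abs_def] A_def[abs_def] by (rule N_deriv[OF dG[OF y(2)] g])
  have ng: "norm (G y) \<noteq> 0" using g by simp
  have gg: "G y \<bullet> G y = (norm (G y))\<^sup>2" by (simp add: power2_norm_eq_inner)
  have inv: "G y \<bullet> A v = 0" for v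
    unfolding A_def using ng by (simp add: inner_diff_right gg field_simps power2_eq_square power3_eq_cube)
  have Aw: "A v \<bullet> w = (DG y v \<bullet> w) / norm (G y)" if "G y \<bullet> w = 0" for v w
    unfolding A_def inner_diff_left inner_scaleR_left using that by simp
  show ?thesis
  proof (rule that[OF dN])
    fix v assume v: "G y \<bullet> v = 0"
    show "norm (A v) \<le> \<kappa> * norm v"
    proof (rule sym_bound[OF g _ inv _ _ v])
      show "linear A" using dN has_derivative_linear by blast
      show "A v \<bullet> w = A w \<bullet> v" if "G y \<bullet> v = 0" "G y \<bullet> w = 0" for v w
        using Aw[OF that(2), of v] Aw[OF that(1), of w] sym[OF y(2), of v w] by simp
      show "\<bar>k\<bar> \<le> \<kappa>" if "v \<noteq> 0" "G y \<bullet> v = 0" "A v = k *\<^sub>R v" for v k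
      proof -
        have "principal_curvature G y (-k)"
          unfolding principal_curvature_def
          using dN[unfolded unitN_def[abs_def]] that by (intro exI[of _ A] exI[of _ v]) simp
        then show ?thesis using cb ldy y(1) unfolding curvature_bounded_def by (metis abs_minus_cancel)
      qed
    qed
  qed
qed


lemma vec3_comp:
  fixes a b c :: real
  shows "(a *\<^sub>R axis 1 1 + b *\<^sub>R axis 2 1 + c *\<^sub>R axis 3 (1::real) :: real^3) $ 1 = a"
    "(a *\<^sub>R axis 1 1 + b *\<^sub>R axis 2 1 + c *\<^sub>R axis 3 (1::real) :: real^3) $ 2 = b"
    "(a *\<^sub>R axis 1 1 + b *\<^sub>R axis 2 1 + c *\<^sub>R axis 3 (1::real) :: real^3) $ 3 = c"
  by (simp_all add: axis_def)

lemma normal_consistent: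
  assumes ld1: "local_defining S p1 U1 F1 G1" and ld2: "local_defining S p2 U2 F2 G2"
    and y: "y \<in> S" "y \<in> U1" "y \<in> U2"
  shows "G1 y \<times> G2 y = 0"
proof (rule ccontr)
  assume cne: "G1 y \<times> G2 y \<noteq> 0"
  define c where "c = G1 y \<times> G2 y"
  define e1 :: "real^3" where "e1 = axis 1 1"
  define e2 :: "real^3" where "e2 = axis 2 1"
  define e3 :: "real^3" where "e3 = axis 3 1"
  define U where "U = U1 \<inter> U2"
  have U: "open U" "y \<in> U" using ldD(1)[OF ld1] ldD(1)[OF ld2] y by (auto simp: U_def)
  define \<Phi> where "\<Phi> z = F1 z *\<^sub>R e1 + F2 z *\<^sub>R e2 + (c \<bullet> z) *\<^sub>R e3" for z
  define L where "L g = blinfun_scaleR_left e1 o\<^sub>L blinfun_inner_left g" for g :: "real^3"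
  define L2 where "L2 g = blinfun_scaleR_left e2 o\<^sub>L blinfun_inner_left g" for g :: "real^3"
  define L3 where "L3 g = blinfun_scaleR_left e3 o\<^sub>L blinfun_inner_left g" for g :: "real^3"
  define f' where "f' z = L (G1 z) + L2 (G2 z) + L3 c" for z
  have f'app: "blinfun_apply (f' z) w = (G1 z \<bullet> w) *\<^sub>R e1 + (G2 z \<bullet> w) *\<^sub>R e2 + (c \<bullet> w) *\<^sub>R e3" for z w
    by (simp add: f'_def L_def L2_def L3_def blinfun.add_left inner_commute)
  have derf: "(\<Phi> has_derivative blinfun_apply (f' x)) (at x)" if "x \<in> U" for x
  proof -
    have d1: "(F1 has_derivative (\<lambda>v. G1 x \<bullet> v)) (at x)" using ldD(4)[OF ld1] that by (auto simp: U_def)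
    have d2: "(F2 has_derivative (\<lambda>v. G2 x \<bullet> v)) (at x)" using ldD(4)[OF ld2] that by (auto simp: U_def)
    have d3: "((\<lambda>z. c \<bullet> z) has_derivative (\<lambda>v. c \<bullet> v)) (at x)"
      by (rule bounded_linear_imp_has_derivative[OF bounded_linear_inner_right])
    have "(\<Phi> has_derivative (\<lambda>w. (G1 x \<bullet> w) *\<^sub>R e1 + (G2 x \<bullet> w) *\<^sub>R e2 + (c \<bullet> w) *\<^sub>R e3)) (at x)"
      unfolding \<Phi>_def[abs_def]
      by (intro has_derivative_add has_derivative_scaleR_left d1 d2 d3)
    then show ?thesis by (simp add: f'app[abs_def])
  qed
  have contG1: "continuous_on U G1"
    by (rule continuous_on_subset[OF _ ]) (rule chart_facts[OF ld1], assumption, auto simp: U_def)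
  have contG2: "continuous_on U G2"
    by (rule continuous_on_subset[OF _ ]) (rule chart_facts[OF ld2], assumption, auto simp: U_def)
  have blL: "bounded_linear L" "bounded_linear L2" "bounded_linear L3"
    unfolding L_def[abs_def] L2_def[abs_def] L3_def[abs_def]
    by (auto intro!: bounded_linear_compose[OF bounded_bilinear.bounded_linear_right[OF bounded_bilinear_blinfun_compose]]
        bounded_linear_blinfun_inner_left)
  have contf: "continuous_on U f'"
    unfolding f'_def
    by (intro continuous_on_add continuous_on_const bounded_linear.continuous_on[OF blL(1) contG1]
        bounded_linear.continuous_on[OF blL(2) contG2])
  define M where "M = blinfun_apply (f' y)"
  have linM: "linear M" unfolding M_def by (rule bounded_linear.linear[OF blinfun.bounded_linear_right])
  have injM: "inj M"
    unfolding linear_inj_iff_eq_0[OF linM]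
  proof -
    show "\<forall>w. M w = 0 \<longrightarrow> w = 0"
    proof (intro allI impI)
      fix w assume "M w = 0"
      then have h: "(G1 y \<bullet> w) *\<^sub>R e1 + (G2 y \<bullet> w) *\<^sub>R e2 + (c \<bullet> w) *\<^sub>R e3 = 0"
        by (simp add: M_def f'app)
      have a: "G1 y \<bullet> w = 0" "G2 y \<bullet> w = 0" "c \<bullet> w = 0"
        using arg_cong[OF h, of "\<lambda>v. v$1"] arg_cong[OF h, of "\<lambda>v. v$2"] arg_cong[OF h, of "\<lambda>v. v$3"]
        unfolding e1_def e2_def e3_def vec3_comp by simp_all
      have "c \<times> w = 0"
      proof -
        have "w \<times> c = 0" unfolding c_def using Lagrange[of w "G1 y" "G2 y"] a by (simp add: inner_commute)
        then show ?thesis using cross_skew[of c w] by simp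
      qed
      then show "w = 0" using cross_dot_cancel[of c w 0] a(3) cne by (simp add: c_def)
    qed
  qed
  obtain gi where gi: "linear gi" "gi \<circ> M = id"
    using linear_injective_left_inverse[OF linM injM] by blast
  define invf where "invf = Blinfun gi"
  have blgi: "bounded_linear gi" using gi(1) linear_conv_bounded_linear by blast
  have invf: "invf o\<^sub>L f' y = id_blinfun"
    by (rule blinfun_eqI) (simp add: invf_def bounded_linear_Blinfun_apply[OF blgi] M_def[symmetric]
        pointfree_idE[OF gi(2)])
  show False
  proof (rule inverse_function_theorem[OF U(1) derf contf U(2) invf])
  fix U' V g g'
  assume U': "open U'" "U' \<subseteq> U" "y \<in> U'" "open V" "\<Phi> y \<in> V" "homeomorphism U' V \<Phi> g"
    "\<And>z. z \<in> V \<Longrightarrow> (g has_derivative (g' z)) (at z)"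
    "\<And>z. z \<in> V \<Longrightarrow> g' z = inv (blinfun_apply (f'(g z)))"
    "\<And>z. z \<in> V \<Longrightarrow> bij (blinfun_apply (f'(g z)))"
  obtain \<epsilon> where eps: "\<epsilon> > 0" "ball (\<Phi> y) \<epsilon> \<subseteq> V" using U'(4,5) openE by blast
  define P where "P = \<Phi> y + (\<epsilon>/2) *\<^sub>R e2"
  have "P \<in> V" using eps by (auto simp: P_def e2_def dist_norm intro!: subsetD[OF eps(2)])
  then obtain z where z: "z \<in> U'" "\<Phi> z = P"
    using U'(6) unfolding homeomorphism_def by force
  have F1y: "F1 y = 0" using ldD(6)[OF ld1] y by blast
  have F2y: "F2 y = 0" using ldD(6)[OF ld2] y by blast
  have "\<Phi> z $ 1 = 0" "\<Phi> z $ 2 = \<epsilon>/2" using z(2) F1y F2y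
    by (simp_all add: P_def \<Phi>_def e1_def e2_def e3_def axis_def)
  then have F1z: "F1 z = 0" and F2z: "F2 z = \<epsilon>/2"
    unfolding \<Phi>_def e1_def e2_def e3_def vec3_comp by simp_all
  have zU: "z \<in> U1" "z \<in> U2" using z(1) U'(2) by (auto simp: U_def)
  have "z \<in> S" using ldD(6)[OF ld1] zU(1) F1z by blast
  then have "F2 z = 0" using ldD(6)[OF ld2] zU(2) by blast
  then show False using F2z eps by simp
  qed
qed


lemma vderiv_zero_near:
  fixes f :: "real \<Rightarrow> 'a::real_normed_vector"
  assumes ab: "a < b" and t: "t \<in> {a..b}"
    and df: "(f has_vector_derivative f') (at t within {a..b})"
    and d: "d > 0" and c: "\<And>s. s \<in> {a..b} \<Longrightarrow> dist s t < d \<Longrightarrow> f s = c"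
  shows "f' = 0"
proof -
  have h1: "((\<lambda>s. c) has_vector_derivative f') (at t within {a..b})"
    by (rule has_vector_derivative_transform_within[OF df d t]) (simp add: c)
  have h2: "((\<lambda>s. c) has_vector_derivative 0) (at t within {a..b})"
    by (rule has_vector_derivative_const)
  show ?thesis
    by (rule vector_derivative_unique_within_closed_interval[OF ab _ h1[folded cbox_interval] h2[folded cbox_interval]])
      (use t in \<open>simp add: cbox_interval\<close>)
qed

lemma local_lip_global:
  fixes f :: "real \<Rightarrow> real"
  assumes loc: "\<And>t. t \<in> {a..b} \<Longrightarrow> \<exists>d>0. \<forall>u\<in>{a..b}. \<forall>v\<in>{a..b}. \<bar>u - t\<bar> < d \<longrightarrow> \<bar>v - t\<bar> < d \<longrightarrow> \<bar>f u - f v\<bar> \<le> K * \<bar>u - v\<bar>"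
    and u: "u \<in> {a..b}" and v: "v \<in> {a..b}"
  shows "\<bar>f u - f v\<bar> \<le> K * \<bar>u - v\<bar>"
proof -
  obtain d where d: "\<And>t. t \<in> {a..b} \<Longrightarrow> d t > 0 \<and> (\<forall>u\<in>{a..b}. \<forall>v\<in>{a..b}. \<bar>u - t\<bar> < d t \<longrightarrow> \<bar>v - t\<bar> < d t \<longrightarrow> \<bar>f u - f v\<bar> \<le> K * \<bar>u - v\<bar>)"
    using loc by metis
  have cov: "{a..b} \<subseteq> \<Union> ((\<lambda>t. ball t (d t)) ` {a..b})"
    using d by force
  obtain \<epsilon> where eps: "\<epsilon> > 0" "\<And>x. x \<in> {a..b} \<Longrightarrow> \<exists>G \<in> (\<lambda>t. ball t (d t)) ` {a..b}. ball x \<epsilon> \<subseteq> G"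
    using Heine_Borel_lemma[OF compact_Icc cov] by blast
  have small: "\<bar>f u - f v\<bar> \<le> K * \<bar>u - v\<bar>" if uv: "u \<in> {a..b}" "v \<in> {a..b}" "\<bar>u - v\<bar> < \<epsilon>" for u v
  proof -
    obtain t where t: "t \<in> {a..b}" "ball u \<epsilon> \<subseteq> ball t (d t)" using eps(2)[OF uv(1)] by blast
    have "u \<in> ball t (d t)" "v \<in> ball t (d t)" using t(2) eps(1) uv(3)
      by (auto simp: dist_real_def subset_iff)
    then have "\<bar>u - t\<bar> < d t" "\<bar>v - t\<bar> < d t" by (auto simp: dist_real_def abs_minus_commute)
    then show ?thesis using d[OF t(1)] uv(1,2) by blast
  qed
  have ind: "\<forall>u\<in>{a..b}. \<forall>v\<in>{a..b}. \<bar>u - v\<bar> < real n * \<epsilon> \<longrightarrow> \<bar>f u - f v\<bar> \<le> K * \<bar>u - v\<bar>" for n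
  proof (induction n)
    case 0
    then show ?case by simp
  next
    case (Suc n)
    show ?case
    proof (intro ballI impI)
      fix u v assume uv: "u \<in> {a..b}" "v \<in> {a..b}" "\<bar>u - v\<bar> < real (Suc n) * \<epsilon>"
      show "\<bar>f u - f v\<bar> \<le> K * \<bar>u - v\<bar>"
      proof (cases "\<bar>u - v\<bar> < \<epsilon>")
        case True
        then show ?thesis using small uv by blast
      next
        case False
        then have n: "n \<ge> 1" using uv(3) eps(1) by (cases n) auto
        define \<tau> where "\<tau> = 1 / real (Suc n)"
        have tau: "0 < \<tau>" "\<tau> \<le> 1" "\<tau> * real (Suc n) = 1" by (auto simp: \<tau>_def)
        define w where "w = u + \<tau> * (v - u)"
        have wu: "\<bar>u - w\<bar> = \<tau> * \<bar>u - v\<bar>" using tau by (simp add: w_def abs_mult abs_minus_commute)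
        have wv: "\<bar>w - v\<bar> = (1 - \<tau>) * \<bar>u - v\<bar>"
        proof -
          have "w - v = (1 - \<tau>) * (u - v)" unfolding w_def by (simp add: algebra_simps)
          then show ?thesis using tau by (simp add: abs_mult)
        qed
        have between: "\<bar>u - v\<bar> = \<bar>u - w\<bar> + \<bar>w - v\<bar>"
          unfolding wu wv by (simp add: algebra_simps)
        have w: "w \<in> {a..b}"
        proof -
          have e1: "w - a = (1 - \<tau>) * (u - a) + \<tau> * (v - a)" "b - w = (1 - \<tau>) * (b - u) + \<tau> * (b - v)"
            by (simp_all add: w_def algebra_simps)
          have "0 \<le> (1 - \<tau>) * (u - a) + \<tau> * (v - a)" "0 \<le> (1 - \<tau>) * (b - u) + \<tau> * (b - v)"
            using tau uv(1,2) by auto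
          then have "0 \<le> w - a" "0 \<le> b - w" unfolding e1 .
          then show ?thesis by simp
        qed
        have "\<bar>u - w\<bar> < \<epsilon>"
        proof -
          have "\<tau> * \<bar>u - v\<bar> < \<tau> * (real (Suc n) * \<epsilon>)" using uv(3) tau by simp
          also have "\<dots> = \<epsilon>" using tau(3) by (simp add: mult.assoc[symmetric])
          finally show ?thesis unfolding wu .
        qed
        then have A: "\<bar>f u - f w\<bar> \<le> K * \<bar>u - w\<bar>" using small uv(1) w by blast
        have "\<bar>w - v\<bar> < real n * \<epsilon>"
        proof -
          have "1 - \<tau> > 0" using n by (simp add: \<tau>_def)
          then have "(1 - \<tau>) * \<bar>u - v\<bar> < (1 - \<tau>) * (real (Suc n) * \<epsilon>)" using uv(3) by simp
          also have "\<dots> = real (Suc n) * \<epsilon> - (\<tau> * real (Suc n)) * \<epsilon>" by (simp only: algebra_simps)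
          also have "\<dots> = real n * \<epsilon>" unfolding tau(3) by (simp add: algebra_simps)
          finally show ?thesis unfolding wv .
        qed
        then have B: "\<bar>f w - f v\<bar> \<le> K * \<bar>w - v\<bar>" using Suc.IH w uv(2) by blast
        have "\<bar>f u - f v\<bar> \<le> \<bar>f u - f w\<bar> + \<bar>f w - f v\<bar>" by linarith
        also have "\<dots> \<le> K * \<bar>u - w\<bar> + K * \<bar>w - v\<bar>" using A B by linarith
        also have "\<dots> = K * \<bar>u - v\<bar>" using between by (simp add: distrib_left)
        finally show ?thesis .
      qed
    qed
  qed
  obtain n where "\<bar>u - v\<bar> < real n * \<epsilon>"
    using reals_Archimedean3[OF eps(1)] by blast
  then show ?thesis using ind u v by blast
qed


lemma mvt_quad:
  fixes f f' :: "real \<Rightarrow> real"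
  assumes ab: "a < b"
    and df: "\<And>t. t \<in> {a..b} \<Longrightarrow> (f has_vector_derivative f' t) (at t within {a..b})"
    and lb: "\<And>t. a < t \<Longrightarrow> t < b \<Longrightarrow> f' t \<ge> \<alpha> + \<beta> * t"
  shows "f b - f a \<ge> \<alpha> * (b - a) + \<beta> * (b\<^sup>2 - a\<^sup>2) / 2"
proof -
  define g where "g t = f t - \<alpha> * t - \<beta> * t\<^sup>2 / 2" for t
  have dg: "(g has_derivative (\<lambda>h. h * (f' t - \<alpha> - \<beta> * t))) (at t within {a..b})" if "a \<le> t" "t \<le> b" for t
  proof -
    have "(f has_derivative (\<lambda>h. h * f' t)) (at t within {a..b})"
      using df[of t] that by (simp add: has_vector_derivative_def)
    then have "(g has_derivative (\<lambda>h. h * f' t - h * \<alpha> - h * (\<beta> * t))) (at t within {a..b})"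
      unfolding g_def[abs_def]
      by (auto intro!: derivative_eq_intros simp: power2_eq_square algebra_simps)
    then show ?thesis by (simp add: algebra_simps)
  qed
  obtain x where x: "x \<in> {a<..<b}" "g b - g a = (b - a) * (f' x - \<alpha> - \<beta> * x)"
    using mvt_simple[OF ab dg] by (auto simp: mult.commute)
  have "f' x - \<alpha> - \<beta> * x \<ge> 0" using lb[of x] x(1) by auto
  then have "g b - g a \<ge> 0" using x(2) ab by simp
  then show ?thesis unfolding g_def by (simp add: power2_eq_square algebra_simps diff_divide_distrib)
qed

lemma unit_parallel:
  fixes x y :: "real^3"
  assumes "x \<times> y = 0" "x \<noteq> 0" "y \<noteq> 0"
  shows "(1 / norm x) *\<^sub>R x = (1 / norm y) *\<^sub>R y \<or> (1 / norm x) *\<^sub>R x = - ((1 / norm y) *\<^sub>R y)"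
proof -
  define ux where "ux = (1 / norm x) *\<^sub>R x"
  define uy where "uy = (1 / norm y) *\<^sub>R y"
  have nx: "norm ux = 1" "norm uy = 1" using assms by (simp_all add: ux_def uy_def)
  have cr: "uy \<times> ux = 0" using assms(1) cross_skew[of x y]
    by (simp add: ux_def uy_def cross_mult_left cross_mult_right)
  have uyuy: "uy \<bullet> uy = 1" using nx by (simp add: dot_square_norm)
  have eq: "ux = (ux \<bullet> uy) *\<^sub>R uy"
  proof (rule cross_dot_cancel[of uy])
    show "uy \<noteq> 0" using nx by auto
    show "uy \<bullet> ux = uy \<bullet> ((ux \<bullet> uy) *\<^sub>R uy)" using uyuy by (simp add: inner_commute)
    show "uy \<times> ux = uy \<times> ((ux \<bullet> uy) *\<^sub>R uy)" using cr by (simp add: cross_mult_right)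
  qed
  have "(ux \<bullet> uy)\<^sup>2 = 1" using norm_cross_dot[of ux uy] nx cr cross_skew[of ux uy] by simp
  then have "ux \<bullet> uy = 1 \<or> ux \<bullet> uy = -1" by (simp add: power2_eq_1_iff)
  then show ?thesis using eq unfolding ux_def[symmetric] uy_def[symmetric] by auto
qed

lemma cont_nbhd:
  fixes \<gamma> :: "real \<Rightarrow> 'a::metric_space"
  assumes "continuous (at t within I) \<gamma>" "open U" "\<gamma> t \<in> U"
  shows "\<exists>d>0. \<forall>s\<in>I. dist s t < d \<longrightarrow> \<gamma> s \<in> U"
proof -
  obtain r where r: "r > 0" "ball (\<gamma> t) r \<subseteq> U" using assms(2,3) openE by blast
  obtain d where "d > 0" "\<forall>s\<in>I. dist s t < d \<longrightarrow> dist (\<gamma> s) (\<gamma> t) < r"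
    using assms(1) r(1) unfolding continuous_within_eps_delta by blast
  then show ?thesis using r(2) by (auto simp: dist_commute subset_iff)
qed

lemma inner_vderiv:
  fixes \<gamma> :: "real \<Rightarrow> 'a::real_inner"
  assumes "(\<gamma> has_vector_derivative g') (at t within I)"
  shows "((\<lambda>s. l \<bullet> (\<gamma> s - p)) has_vector_derivative (l \<bullet> g')) (at t within I)"
proof -
  have "((\<lambda>s. \<gamma> s - p) has_derivative (\<lambda>h. h *\<^sub>R g')) (at t within I)"
    using assms unfolding has_vector_derivative_def
    by (auto intro!: derivative_eq_intros)
  from bounded_linear.has_derivative[OF bounded_linear_inner_right[of l] this]
  show ?thesis unfolding has_vector_derivative_def by (simp add: mult.commute)
qed

lemma lin_zero:
  fixes \<gamma> :: "real \<Rightarrow> 'a::real_inner"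
  assumes ab: "a < b" and t: "t \<in> {a..b}"
    and d: "(\<gamma> has_vector_derivative g') (at t within {a..b})"
    and z: "\<And>s. s \<in> {a..b} \<Longrightarrow> l \<bullet> (\<gamma> s - p) = 0"
  shows "l \<bullet> g' = 0"
  using vderiv_zero_near[OF ab t inner_vderiv[OF d, of l p] zero_less_one, of 0] z by simp


lemma parseval3:
  fixes n e w :: "real^3"
  assumes "norm n = 1" "norm e = 1" "n \<bullet> e = 0"
  shows "(norm w)\<^sup>2 = (w \<bullet> n)\<^sup>2 + (w \<bullet> e)\<^sup>2 + (w \<bullet> (n \<times> e))\<^sup>2"
proof -
  have "w \<bullet> w = w \<bullet> ((w \<bullet> n) *\<^sub>R n + (w \<bullet> e) *\<^sub>R e + (w \<bullet> (n \<times> e)) *\<^sub>R (n \<times> e))"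
    using frame_expand[OF assms, of w] by simp
  then show ?thesis unfolding power2_norm_eq_inner by (simp add: inner_add_right power2_eq_square)
qed

lemma min_lip:
  fixes a b c d :: real
  shows "\<bar>min a b - min c d\<bar> \<le> max \<bar>a - c\<bar> \<bar>b - d\<bar>"
  by argo

lemma tangency:
  assumes ab: "a < b" and t: "t \<in> {a..b}"
    and d\<gamma>: "(\<gamma> has_vector_derivative g') (at t within {a..b})"
    and inS: "\<And>s. s \<in> {a..b} \<Longrightarrow> \<gamma> s \<in> S"
    and ld: "local_defining S x U F G" and tU: "\<gamma> t \<in> U"
  shows "G (\<gamma> t) \<bullet> g' = 0"
proof -
  obtain d where d: "d > 0" "\<forall>s\<in>{a..b}. dist s t < d \<longrightarrow> \<gamma> s \<in> U"
    using cont_nbhd[OF has_vector_derivative_continuous[OF d\<gamma>] ldD(1)[OF ld] tU] by blast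
  have "((\<lambda>s. F (\<gamma> s)) has_derivative (\<lambda>h. G (\<gamma> t) \<bullet> (h *\<^sub>R g'))) (at t within {a..b})"
    using has_derivative_compose[OF d\<gamma>[unfolded has_vector_derivative_def] ldD(4)[OF ld tU]] .
  then have "((\<lambda>s. F (\<gamma> s)) has_vector_derivative (G (\<gamma> t) \<bullet> g')) (at t within {a..b})"
    unfolding has_vector_derivative_def by (simp add: mult.commute)
  moreover have "F (\<gamma> s) = 0" if "s \<in> {a..b}" "dist s t < d" for s
  proof -
    have "\<gamma> s \<in> S \<inter> U" using inS[OF that(1)] d(2) that by blast
    then show ?thesis using ldD(6)[OF ld] by blast
  qed
  ultimately show ?thesis using vderiv_zero_near[OF ab t _ d(1)] by blast
qed

lemma normal_parallel:
  assumes un: "unit_normal S p n"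
  obtains U F G where "local_defining S p U F G"
    "n = unitN G p \<or> n = - unitN G p"
proof -
  obtain U F G where ld: "local_defining S p U F G" and perp: "\<forall>v. G p \<bullet> v = 0 \<longrightarrow> n \<bullet> v = 0"
    and n1: "norm n = 1"
    using un unfolding unit_normal_def by blast
  define g where "g = G p"
  have g: "g \<noteq> 0" using ldD(5)[OF ld ldD(2)[OF ld]] by (simp add: g_def)
  have gg: "g \<bullet> g \<noteq> 0" using g by simp
  define c where "c = (n \<bullet> g) / (g \<bullet> g)"
  define w where "w = n - c *\<^sub>R g"
  have gw: "g \<bullet> w = 0" using gg by (simp add: w_def c_def inner_diff_right inner_commute)
  then have nw: "n \<bullet> w = 0" using perp by (simp add: g_def)
  have "w \<bullet> w = 0" using gw nw by (simp add: w_def inner_diff_left inner_commute)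
  then have "n = c *\<^sub>R g" by (simp add: w_def)
  then have "\<bar>c\<bar> * norm g = 1" using n1 by simp
  then have "c = 1 / norm g \<or> c = - (1 / norm g)" using g by (auto simp: abs_if field_simps split: if_splits)
  then have "n = unitN G p \<or> n = - unitN G p" using \<open>n = c *\<^sub>R g\<close> by (auto simp: unitN_def g_def)
  then show ?thesis using that ld by blast
qed


lemma curve_main:
  fixes \<gamma> \<gamma>' \<gamma>'' :: "real \<Rightarrow> real^3"
  assumes surf: "smooth_surface S" and cb: "curvature_bounded S \<kappa>" and k0: "\<kappa> \<ge> 0"
    and ab: "a < b" and si: "si \<in> {a,b}" and sj: "sj \<in> {a,b}" and sne: "si \<noteq> sj"
    and d\<gamma>: "\<And>t. t \<in> {a..b} \<Longrightarrow> (\<gamma> has_vector_derivative \<gamma>' t) (at t within {a..b})"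
    and d\<gamma>': "\<And>t. t \<in> {a..b} \<Longrightarrow> (\<gamma>' has_vector_derivative \<gamma>'' t) (at t within {a..b})"
    and unit: "\<And>t. t \<in> {a..b} \<Longrightarrow> norm (\<gamma>' t) = 1"
    and inS: "\<And>t. t \<in> {a..b} \<Longrightarrow> \<gamma> t \<in> S"
    and plane: "\<And>t. t \<in> {a..b} \<Longrightarrow> \<exists>u w. \<gamma> t = p + u *\<^sub>R n + w *\<^sub>R (q - p)"
    and ends: "\<gamma> si = p" "\<gamma> sj = q"
    and kL: "\<kappa> * \<bar>si - sj\<bar> \<le> 1"
    and un: "unit_normal S p n"
  shows "\<bar>(p - q) \<bullet> n\<bar> \<le> \<kappa> * (si - sj)\<^sup>2 / 2 \<and> \<bar>si - sj\<bar> \<le> 2 * norm (p - q)"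
proof -
  define I where "I = {a..b}"
  have siI: "si \<in> I" and sjI: "sj \<in> I" using si sj ab by (auto simp: I_def)
  have n1: "norm n = 1" using un unfolding unit_normal_def by blast
  have "\<forall>s\<in>I. \<exists>c. local_defining S (\<gamma> s) (fst c) (fst (snd c)) (snd (snd c))"
    using surf inS unfolding smooth_surface_def I_def by fastforce
  then obtain ch where ch: "\<And>s. s \<in> I \<Longrightarrow> local_defining S (\<gamma> s) (fst (ch s)) (fst (snd (ch s))) (snd (snd (ch s)))"
    using bchoice by metis
  define Nc where "Nc s = unitN (snd (snd (ch s))) (\<gamma> s)" for s
  define \<rho> where "\<rho> s = min (norm (n - Nc s)) (norm (n + Nc s))" for s
  have inv: "\<rho> s = min (norm (n - unitN G (\<gamma> s))) (norm (n + unitN G (\<gamma> s)))"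
    if s: "s \<in> I" and ld: "local_defining S x U F G" and sU: "\<gamma> s \<in> U" for s x U F G
  proof -
    have ldc: "local_defining S (\<gamma> s) (fst (ch s)) (fst (snd (ch s))) (snd (snd (ch s)))" using ch[OF s] .
    have cr: "snd (snd (ch s)) (\<gamma> s) \<times> G (\<gamma> s) = 0"
      by (rule normal_consistent[OF ldc ld inS[OF s[unfolded I_def]] ldD(2)[OF ldc] sU])
    have "Nc s = unitN G (\<gamma> s) \<or> Nc s = - unitN G (\<gamma> s)"
      using unit_parallel[OF cr ldD(5)[OF ldc ldD(2)[OF ldc]] ldD(5)[OF ld sU]]
      by (simp add: Nc_def unitN_def)
    then show ?thesis unfolding \<rho>_def by (auto simp: min.commute)
  qed
  have tang: "G (\<gamma> t) \<bullet> \<gamma>' t = 0" if "t \<in> I" "local_defining S x U F G" "\<gamma> t \<in> U" for t x U F G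
    using tangency[OF ab that(1)[unfolded I_def] d\<gamma>[OF that(1)[unfolded I_def]] inS that(2,3)] .
  have loclip: "\<exists>d>0. \<forall>u\<in>I. \<forall>v\<in>I. \<bar>u - t0\<bar> < d \<longrightarrow> \<bar>v - t0\<bar> < d \<longrightarrow> \<bar>\<rho> u - \<rho> v\<bar> \<le> \<kappa> * \<bar>u - v\<bar>"
    if t0: "t0 \<in> I" for t0
  proof -
    define U where "U = fst (ch t0)"
    define F where "F = fst (snd (ch t0))"
    define G where "G = snd (snd (ch t0))"
    have ld: "local_defining S (\<gamma> t0) U F G" using ch[OF t0] by (simp add: U_def F_def G_def)
    obtain d where d: "d > 0" "\<forall>s\<in>I. dist s t0 < d \<longrightarrow> \<gamma> s \<in> U"
      using cont_nbhd[OF has_vector_derivative_continuous[OF d\<gamma>[OF t0[unfolded I_def]]] ldD(1)[OF ld] ldD(2)[OF ld]]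
      unfolding I_def by blast
    define J where "J = I \<inter> {t0 - d <..< t0 + d}"
    have JI: "J \<subseteq> I" by (auto simp: J_def)
    have JU: "\<gamma> s \<in> U" if "s \<in> J" for s using d(2) that by (auto simp: J_def dist_real_def)
    have cJ: "convex J" unfolding J_def I_def by (intro convex_Int convex_real_interval)+
    define h where "h s = unitN G (\<gamma> s)" for s
    have "\<forall>s\<in>J. \<exists>A. (h has_derivative (\<lambda>k. A (k *\<^sub>R \<gamma>' s))) (at s within J) \<and> onorm (\<lambda>k. A (k *\<^sub>R \<gamma>' s)) \<le> \<kappa>"
    proof
      fix s assume sJ: "s \<in> J"
      have sI: "s \<in> I" using sJ JI by blast
      obtain A where dA: "(unitN G has_derivative A) (at (\<gamma> s))"
        and bA: "\<And>v. G (\<gamma> s) \<bullet> v = 0 \<Longrightarrow> norm (A v) \<le> \<kappa> * norm v"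
        using DN_bound[OF ld cb inS[OF sI[unfolded I_def]] JU[OF sJ]] by blast
      have dgs: "(\<gamma> has_derivative (\<lambda>k. k *\<^sub>R \<gamma>' s)) (at s within J)"
        using has_vector_derivative_within_subset[OF d\<gamma>[OF sI[unfolded I_def]] JI[unfolded I_def]]
        unfolding has_vector_derivative_def .
      have dh: "(h has_derivative (\<lambda>k. A (k *\<^sub>R \<gamma>' s))) (at s within J)"
        unfolding h_def using has_derivative_compose[OF dgs dA] .
      have linA: "linear A" using dA has_derivative_linear by blast
      have "(\<lambda>k. A (k *\<^sub>R \<gamma>' s)) = (\<lambda>k. k *\<^sub>R A (\<gamma>' s))" using linA by (simp add: linear_scale)
      then have "onorm (\<lambda>k. A (k *\<^sub>R \<gamma>' s)) = norm (A (\<gamma>' s))"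
        using onorm_scaleR_left[OF bounded_linear_ident, of "A (\<gamma>' s)"] onorm_id[where 'a=real] by simp
      also have "\<dots> \<le> \<kappa> * norm (\<gamma>' s)" using bA tang[OF sI ld JU[OF sJ]] by blast
      also have "\<dots> = \<kappa>" using unit sI by (simp add: I_def)
      finally show "\<exists>A. (h has_derivative (\<lambda>k. A (k *\<^sub>R \<gamma>' s))) (at s within J) \<and> onorm (\<lambda>k. A (k *\<^sub>R \<gamma>' s)) \<le> \<kappa>"
        using dh by blast
    qed
    then obtain A where A: "\<And>s. s \<in> J \<Longrightarrow> (h has_derivative (\<lambda>k. A s (k *\<^sub>R \<gamma>' s))) (at s within J)"
      "\<And>s. s \<in> J \<Longrightarrow> onorm (\<lambda>k. A s (k *\<^sub>R \<gamma>' s)) \<le> \<kappa>"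
      using bchoice[of J] by metis
    have hlip: "norm (h u - h v) \<le> \<kappa> * norm (u - v)" if "u \<in> J" "v \<in> J" for u v
      by (rule differentiable_bound[OF cJ A(1) A(2) that])
    show ?thesis
    proof (intro exI[of _ d] conjI d(1) ballI impI)
      fix u v assume uv: "u \<in> I" "v \<in> I" "\<bar>u - t0\<bar> < d" "\<bar>v - t0\<bar> < d"
      have uJ: "u \<in> J" "v \<in> J" using uv by (auto simp: J_def)
      have ru: "\<rho> u = min (norm (n - h u)) (norm (n + h u))" using inv[OF uv(1) ld JU[OF uJ(1)]] by (simp add: h_def)
      have rv: "\<rho> v = min (norm (n - h v)) (norm (n + h v))" using inv[OF uv(2) ld JU[OF uJ(2)]] by (simp add: h_def)
      have "\<bar>norm (n - h u) - norm (n - h v)\<bar> \<le> norm (h u - h v)"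
        using norm_triangle_ineq3[of "n - h u" "n - h v"] by (simp add: norm_minus_commute)
      moreover have "\<bar>norm (n + h u) - norm (n + h v)\<bar> \<le> norm (h u - h v)"
        using norm_triangle_ineq3[of "n + h u" "n + h v"] by simp
      ultimately have "\<bar>\<rho> u - \<rho> v\<bar> \<le> norm (h u - h v)"
        unfolding ru rv using min_lip[of "norm (n - h u)" "norm (n + h u)" "norm (n - h v)" "norm (n + h v)"]
        by linarith
      also have "\<dots> \<le> \<kappa> * \<bar>u - v\<bar>" using hlip[OF uJ] by simp
      finally show "\<bar>\<rho> u - \<rho> v\<bar> \<le> \<kappa> * \<bar>u - v\<bar>" .
    qed
  qed
  obtain U0 F0 G0 where ld0: "local_defining S p U0 F0 G0" and npar: "n = unitN G0 p \<or> n = - unitN G0 p"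
    using normal_parallel[OF un] by blast
  have pU0: "\<gamma> si \<in> U0" using ldD(2)[OF ld0] ends(1) by simp
  have rho0: "\<rho> si = 0"
    using inv[OF siI ld0 pU0] npar ends(1) by (auto simp: min_def)
  have rhob: "\<rho> t \<le> \<kappa> * \<bar>t - si\<bar>" if "t \<in> I" for t
    using local_lip_global[of a b \<rho> \<kappa> t si] loclip that siI rho0 unfolding I_def by fastforce
  have gnb: "\<bar>\<gamma>' t \<bullet> n\<bar> \<le> \<kappa> * \<bar>t - si\<bar>" if tI: "t \<in> I" for t
  proof -
    have ldt: "local_defining S (\<gamma> t) (fst (ch t)) (fst (snd (ch t))) (snd (snd (ch t)))" using ch[OF tI] .
    have tz: "snd (snd (ch t)) (\<gamma> t) \<bullet> \<gamma>' t = 0" using tang[OF tI ldt ldD(2)[OF ldt]] .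
    have nz: "Nc t \<bullet> \<gamma>' t = 0" using tz by (simp add: Nc_def unitN_def)
    have u1: "norm (\<gamma>' t) = 1" using unit tI by (simp add: I_def)
    have "\<bar>\<gamma>' t \<bullet> n\<bar> = \<bar>\<gamma>' t \<bullet> (n - Nc t)\<bar>" using nz by (simp add: inner_diff_right inner_commute)
    also have "\<dots> \<le> norm (n - Nc t)" using Cauchy_Schwarz_ineq2[of "\<gamma>' t" "n - Nc t"] u1 by simp
    finally have A: "\<bar>\<gamma>' t \<bullet> n\<bar> \<le> norm (n - Nc t)" .
    have "\<bar>\<gamma>' t \<bullet> n\<bar> = \<bar>\<gamma>' t \<bullet> (n + Nc t)\<bar>" using nz by (simp add: inner_add_right inner_commute)
    also have "\<dots> \<le> norm (n + Nc t)" using Cauchy_Schwarz_ineq2[of "\<gamma>' t" "n + Nc t"] u1 by simp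
    finally have B: "\<bar>\<gamma>' t \<bullet> n\<bar> \<le> norm (n + Nc t)" .
    have "\<bar>\<gamma>' t \<bullet> n\<bar> \<le> \<rho> t" using A B by (simp add: \<rho>_def)
    then show ?thesis using rhob[OF tI] by linarith
  qed
  define e where "e = \<gamma>' si"
  have e1: "norm e = 1" using unit siI by (simp add: e_def I_def)
  have ne: "n \<bullet> e = 0"
  proof -
    have "G0 (\<gamma> si) \<bullet> e = 0" using tang[OF siI ld0 pU0] by (simp add: e_def)
    then show ?thesis using npar ends(1) by (auto simp: unitN_def)
  qed
  have nn: "n \<bullet> n = 1" using n1 by (simp add: dot_square_norm)
  define m where "m = n \<times> (q - p)"
  have mz: "m \<bullet> (\<gamma> t - p) = 0" if tI: "t \<in> {a..b}" for t
  proof -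
    obtain u w where "\<gamma> t = p + u *\<^sub>R n + w *\<^sub>R (q - p)" using plane[OF tI] by blast
    then show ?thesis by (simp add: m_def inner_add_right dot_cross_self)
  qed
  have mg: "m \<bullet> \<gamma>' t = 0" if "t \<in> {a..b}" for t
    using lin_zero[OF ab that d\<gamma>[OF that] mz] .
  have m0: "m \<noteq> 0"
  proof
    assume "m = 0"
    then have qp: "q - p = ((q - p) \<bullet> n) *\<^sub>R n"
    proof -
      have n0: "n \<noteq> 0" using n1 by (metis norm_zero zero_neq_one)
      show ?thesis
        using cross_dot_cancel[of n "q - p" "((q - p) \<bullet> n) *\<^sub>R n"] n0 nn \<open>m = 0\<close>
        by (auto simp: m_def cross_mult_right inner_commute)
    qed
    have "e \<bullet> (\<gamma> t - p) = 0" if tI: "t \<in> {a..b}" for t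
    proof -
      obtain u w where "\<gamma> t = p + u *\<^sub>R n + w *\<^sub>R (q - p)" using plane[OF tI] by blast
      moreover have eqp: "e \<bullet> (q - p) = 0"
        by (subst qp) (simp add: ne inner_commute[of e n])
      ultimately show ?thesis using ne by (simp add: inner_add_right inner_commute)
    qed
    from lin_zero[OF ab siI[unfolded I_def] d\<gamma>[OF siI[unfolded I_def]] this]
    show False using e1 by (simp add: e_def[symmetric] dot_square_norm)
  qed
  define mh where "mh = (1 / norm m) *\<^sub>R m"
  have mh1: "norm mh = 1" using m0 by (simp add: mh_def)
  have nmh: "n \<bullet> mh = 0" by (simp add: mh_def m_def dot_cross_self)
  define c where "c = n \<times> mh"
  have mhg: "mh \<bullet> \<gamma>' t = 0" if "t \<in> {a..b}" for t using mg[OF that] by (simp add: mh_def)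
  have emh: "mh \<bullet> e = 0" using mhg[OF siI[unfolded I_def]] by (simp add: e_def)
  have eexp: "e = (e \<bullet> c) *\<^sub>R c"
    using frame_expand[OF n1 mh1 nmh, of e] ne emh by (simp add: c_def inner_commute)
  have ec: "(e \<bullet> c)\<^sup>2 = 1"
    using parseval3[OF n1 mh1 nmh, of e] ne emh e1 by (simp add: c_def inner_commute)
  have gsq: "(\<gamma>' t \<bullet> e)\<^sup>2 = 1 - (\<gamma>' t \<bullet> n)\<^sup>2" if "t \<in> {a..b}" for t
  proof -
    have "(norm (\<gamma>' t))\<^sup>2 = (\<gamma>' t \<bullet> n)\<^sup>2 + (\<gamma>' t \<bullet> mh)\<^sup>2 + (\<gamma>' t \<bullet> c)\<^sup>2"
      using parseval3[OF n1 mh1 nmh] by (simp add: c_def)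
    then have A: "1 = (\<gamma>' t \<bullet> n)\<^sup>2 + (\<gamma>' t \<bullet> c)\<^sup>2" using unit[OF that] mhg[OF that] by (simp add: inner_commute)
    have "\<gamma>' t \<bullet> e = (e \<bullet> c) * (\<gamma>' t \<bullet> c)" by (subst eexp) simp
    then have "(\<gamma>' t \<bullet> e)\<^sup>2 = (\<gamma>' t \<bullet> c)\<^sup>2" using ec by (simp add: power_mult_distrib)
    then show ?thesis using A by simp
  qed
  define cf where "cf t = e \<bullet> \<gamma>' t" for t
  have cont: "continuous_on {a..b} cf"
  proof -
    have "continuous_on {a..b} \<gamma>'"
      using d\<gamma>' has_vector_derivative_continuous continuous_on_eq_continuous_within by blast
    then show ?thesis unfolding cf_def by (intro continuous_on_inner continuous_on_const)
  qed
  have cfsi: "cf si = 1" using e1 by (simp add: cf_def e_def[symmetric] dot_square_norm)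
  have cfsq: "(cf t)\<^sup>2 = 1 - (\<gamma>' t \<bullet> n)\<^sup>2" if "t \<in> {a..b}" for t
    using gsq[OF that] by (simp add: cf_def inner_commute)
  have small1: "(\<gamma>' z \<bullet> n)\<^sup>2 < 1" if "z \<in> {a..b}" "\<kappa> * \<bar>z - si\<bar> < 1" for z
  proof -
    have "\<bar>\<gamma>' z \<bullet> n\<bar> < 1" using gnb[of z] that by (simp add: I_def)
    then show ?thesis by (simp add: abs_square_less_1)
  qed
  have pos: "cf t > 0" if tI: "t \<in> {a..b}" and tk: "\<kappa> * \<bar>t - si\<bar> < 1" for t
  proof (rule ccontr)
    assume "\<not> cf t > 0"
    then have le: "cf t \<le> 0" by simp
    have "\<exists>z. z \<in> {a..b} \<and> \<bar>z - si\<bar> \<le> \<bar>t - si\<bar> \<and> cf z = 0"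
    proof (cases "t \<le> si")
      case True
      have "{t..si} \<subseteq> {a..b}" using tI siI by (auto simp: I_def)
      then have "continuous_on {t..si} cf" by (rule continuous_on_subset[OF cont])
      then obtain z where "t \<le> z" "z \<le> si" "cf z = 0" using IVT'[of cf t 0 si] le cfsi True by auto
      then show ?thesis using tI siI by (intro exI[of _ z]) (auto simp: I_def)
    next
      case False
      have "{si..t} \<subseteq> {a..b}" using tI siI by (auto simp: I_def)
      then have "continuous_on {si..t} cf" by (rule continuous_on_subset[OF cont])
      then obtain z where "si \<le> z" "z \<le> t" "cf z = 0" using IVT2'[of cf t 0 si] le cfsi False by auto
      then show ?thesis using tI siI by (intro exI[of _ z]) (auto simp: I_def)
    qed
    then obtain z where z: "z \<in> {a..b}" "\<bar>z - si\<bar> \<le> \<bar>t - si\<bar>" "cf z = 0" by blast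
    have "\<kappa> * \<bar>z - si\<bar> \<le> \<kappa> * \<bar>t - si\<bar>" using z(2) k0 by (rule mult_left_mono)
    then have "(\<gamma>' z \<bullet> n)\<^sup>2 < 1" using small1[OF z(1)] tk by linarith
    then show False using cfsq[OF z(1)] z(3) by simp
  qed
  have lb: "cf t \<ge> 1 - \<kappa> * \<bar>t - si\<bar>" if tI: "t \<in> {a..b}" and tk: "\<kappa> * \<bar>t - si\<bar> < 1" for t
  proof -
    define x where "x = \<kappa> * \<bar>t - si\<bar>"
    have x: "0 \<le> x" "x < 1" using k0 tk by (simp_all add: x_def)
    have "\<bar>\<gamma>' t \<bullet> n\<bar> \<le> x" using gnb[of t] tI by (simp add: I_def x_def)
    then have "(\<gamma>' t \<bullet> n)\<^sup>2 \<le> x\<^sup>2" by (metis abs_ge_zero abs_le_square_iff power2_abs power_mono)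
    moreover have "x * x \<le> x" using x by (simp add: mult_left_le)
    ultimately have "(1 - x)\<^sup>2 \<le> (cf t)\<^sup>2" using cfsq[OF tI] x by (simp add: power2_eq_square algebra_simps)
    moreover have "0 \<le> cf t" using pos[OF tI tk] by simp
    ultimately have "1 - x \<le> cf t" by (rule power2_le_imp_le)
    then show ?thesis by (simp add: x_def)
  qed
  have mq: "l \<bullet> (\<gamma> b - p) - l \<bullet> (\<gamma> a - p) \<ge> \<alpha> * (b - a) + \<beta> * (b\<^sup>2 - a\<^sup>2) / 2"
    if "\<And>t. a < t \<Longrightarrow> t < b \<Longrightarrow> l \<bullet> \<gamma>' t \<ge> \<alpha> + \<beta> * t" for l \<alpha> \<beta>
    by (rule mvt_quad[OF ab _ that]) (rule inner_vderiv[OF d\<gamma>])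
  have int_k: "\<kappa> * \<bar>t - si\<bar> < 1" if "a < t" "t < b" for t
  proof (cases "\<kappa> = 0")
    case True then show ?thesis by simp
  next
    case False
    then have "\<kappa> > 0" using k0 by simp
    moreover have "\<bar>t - si\<bar> < \<bar>si - sj\<bar>" using that si sj sne by auto
    ultimately have "\<kappa> * \<bar>t - si\<bar> < \<kappa> * \<bar>si - sj\<bar>" by simp
    then show ?thesis using kL by linarith
  qed
  have L: "\<bar>si - sj\<bar> = b - a" using si sj sne ab by auto
  have key: "\<bar>e \<bullet> (q - p)\<bar> \<ge> (b - a) / 2 \<and> \<bar>n \<bullet> (q - p)\<bar> \<le> \<kappa> * (b - a)\<^sup>2 / 2"
  proof (cases "si = a")
    case True
    then have sjb: "sj = b" using sj sne by auto
    have ga: "\<gamma> a = p" "\<gamma> b = q" using ends True sjb by auto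
    have "e \<bullet> (q - p) \<ge> (1 + \<kappa> * a) * (b - a) + (- \<kappa>) * (b\<^sup>2 - a\<^sup>2) / 2"
      using mq[where l=e and \<alpha>="1 + \<kappa> * a" and \<beta>="- \<kappa>"] lb int_k True ga by (force simp: cf_def algebra_simps)
    moreover have "(1 + \<kappa> * a) * (b - a) + (- \<kappa>) * (b\<^sup>2 - a\<^sup>2) / 2 = (b - a) * (1 - \<kappa> * (b - a) / 2)"
      by (simp add: power2_eq_square field_simps)
    moreover have "(b - a) * (1 - \<kappa> * (b - a) / 2) \<ge> (b - a) / 2"
    proof -
      have "(b - a) * (1 - \<kappa> * (b - a) / 2) - (b - a) / 2 = (b - a) * (1 - \<kappa> * (b - a)) / 2" by (simp add: field_simps)
      moreover have "(b - a) * (1 - \<kappa> * (b - a)) \<ge> 0" using ab kL L by simp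
      ultimately show ?thesis by linarith
    qed
    ultimately have A: "e \<bullet> (q - p) \<ge> (b - a) / 2" by linarith
    have lbn: "\<kappa> * a + - \<kappa> * t \<le> l \<bullet> \<gamma>' t" if "a < t" "t < b" "l = n \<or> l = -n" for t l
    proof -
      have "\<bar>n \<bullet> \<gamma>' t\<bar> \<le> \<kappa> * (t - a)" using gnb[of t] that True by (simp add: I_def inner_commute)
      then show ?thesis using that(3) by (auto simp: algebra_simps abs_le_iff)
    qed
    have "n \<bullet> (q - p) \<ge> (\<kappa> * a) * (b - a) + (- \<kappa>) * (b\<^sup>2 - a\<^sup>2) / 2"
      using mq[where l=n and \<alpha>="\<kappa> * a" and \<beta>="- \<kappa>", OF lbn] ga by simp
    moreover have "(-n) \<bullet> (q - p) \<ge> (\<kappa> * a) * (b - a) + (- \<kappa>) * (b\<^sup>2 - a\<^sup>2) / 2"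
      using mq[where l="-n" and \<alpha>="\<kappa> * a" and \<beta>="- \<kappa>", OF lbn] ga by simp
    moreover have "(\<kappa> * a) * (b - a) + (- \<kappa>) * (b\<^sup>2 - a\<^sup>2) / 2 = - (\<kappa> * (b - a)\<^sup>2 / 2)"
      by (simp add: power2_eq_square field_simps)
    ultimately have B: "\<bar>n \<bullet> (q - p)\<bar> \<le> \<kappa> * (b - a)\<^sup>2 / 2" by auto
    show ?thesis using A B by linarith
  next
    case False
    then have sib: "si = b" and sja: "sj = a" using si sj sne by auto
    have ga: "\<gamma> b = p" "\<gamma> a = q" using ends sib sja by auto
    have "- (e \<bullet> (q - p)) \<ge> (1 - \<kappa> * b) * (b - a) + \<kappa> * (b\<^sup>2 - a\<^sup>2) / 2"
      using mq[where l=e and \<alpha>="1 - \<kappa> * b" and \<beta>="\<kappa>"] lb int_k sib ga by (force simp: cf_def algebra_simps)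
    moreover have "(1 - \<kappa> * b) * (b - a) + \<kappa> * (b\<^sup>2 - a\<^sup>2) / 2 = (b - a) * (1 - \<kappa> * (b - a) / 2)"
      by (simp add: power2_eq_square field_simps)
    moreover have "(b - a) * (1 - \<kappa> * (b - a) / 2) \<ge> (b - a) / 2"
    proof -
      have "(b - a) * (1 - \<kappa> * (b - a) / 2) - (b - a) / 2 = (b - a) * (1 - \<kappa> * (b - a)) / 2" by (simp add: field_simps)
      moreover have "(b - a) * (1 - \<kappa> * (b - a)) \<ge> 0" using ab kL L by simp
      ultimately show ?thesis by linarith
    qed
    ultimately have A: "- (e \<bullet> (q - p)) \<ge> (b - a) / 2" by linarith
    have lbn: "- \<kappa> * b + \<kappa> * t \<le> l \<bullet> \<gamma>' t" if "a < t" "t < b" "l = n \<or> l = -n" for t l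
    proof -
      have "\<bar>n \<bullet> \<gamma>' t\<bar> \<le> \<kappa> * (b - t)" using gnb[of t] that sib by (simp add: I_def inner_commute)
      then show ?thesis using that(3) by (auto simp: algebra_simps abs_le_iff)
    qed
    have "- (n \<bullet> (q - p)) \<ge> (- \<kappa> * b) * (b - a) + \<kappa> * (b\<^sup>2 - a\<^sup>2) / 2"
      using mq[where l=n and \<alpha>="- \<kappa> * b" and \<beta>="\<kappa>", OF lbn] ga by simp
    moreover have "- ((-n) \<bullet> (q - p)) \<ge> (- \<kappa> * b) * (b - a) + \<kappa> * (b\<^sup>2 - a\<^sup>2) / 2"
      using mq[where l="-n" and \<alpha>="- \<kappa> * b" and \<beta>="\<kappa>", OF lbn] ga by simp
    moreover have "(- \<kappa> * b) * (b - a) + \<kappa> * (b\<^sup>2 - a\<^sup>2) / 2 = - (\<kappa> * (b - a)\<^sup>2 / 2)"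
      by (simp add: power2_eq_square field_simps)
    ultimately have B: "\<bar>n \<bullet> (q - p)\<bar> \<le> \<kappa> * (b - a)\<^sup>2 / 2" by auto
    show ?thesis using A B by linarith
  qed
  have "\<bar>e \<bullet> (q - p)\<bar> \<le> norm (q - p)" using Cauchy_Schwarz_ineq2[of e "q - p"] e1 by simp
  then have c1: "\<bar>si - sj\<bar> \<le> 2 * norm (p - q)" using key L by (simp add: norm_minus_commute)
  have "(p - q) \<bullet> n = - (n \<bullet> (q - p))" by (simp add: inner_commute inner_diff_left inner_diff_right)
  then have c2: "\<bar>(p - q) \<bullet> n\<bar> \<le> \<kappa> * (si - sj)\<^sup>2 / 2"
    using key L by (metis abs_minus_cancel power2_abs)
  show ?thesis using c1 c2 by blast
qed


lemma per_i:
  assumes surfS: "smooth_surface S" "curvature_bounded S \<kappa>" and k0: "\<kappa> \<ge> 0"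
    and pS: "p \<in> S" and un: "unit_normal S p nv"
    and arc: "arc_hyp S \<kappa> p q nv"
    and near: "norm (p - q) \<le> 2 * norm d"
  shows "\<bar>(p - q) \<bullet> nv\<bar> \<le> 8 * \<kappa> * (norm d)\<^sup>2"
proof -
  obtain \<gamma> :: "real \<Rightarrow> real^3" and \<gamma>' \<gamma>'' si sj where
    H: "\<forall>t\<in>{min si sj .. max si sj}. (\<gamma> has_vector_derivative \<gamma>' t) (at t within {min si sj .. max si sj}) \<and>
                  (\<gamma>' has_vector_derivative \<gamma>'' t) (at t within {min si sj .. max si sj}) \<and>
                  norm (\<gamma>' t) = 1"
    and img: "\<gamma> ` {min si sj .. max si sj} \<subseteq> S \<inter> {p + u *\<^sub>R nv + w *\<^sub>R (q - p) | u w. True}"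
    and ends: "\<gamma> si = p" "\<gamma> sj = q" and kL: "\<kappa> * \<bar>si - sj\<bar> \<le> 1"
    using arc unfolding arc_hyp_def Let_def by blast
  show ?thesis
  proof (cases "si = sj")
    case True
    then have "p = q" using ends by simp
    then show ?thesis using k0 by simp
  next
    case False
    define a where "a = min si sj"
    define b where "b = max si sj"
    have ab: "a < b" using False by (auto simp: a_def b_def)
    have si: "si \<in> {a, b}" and sj: "sj \<in> {a, b}" by (auto simp: a_def b_def min_def max_def)
    have R: "\<bar>(p - q) \<bullet> nv\<bar> \<le> \<kappa> * (si - sj)\<^sup>2 / 2 \<and> \<bar>si - sj\<bar> \<le> 2 * norm (p - q)"
    proof (rule curve_main[OF surfS k0 ab si sj False])
      show "(\<gamma> has_vector_derivative \<gamma>' t) (at t within {a..b})" if "t \<in> {a..b}" for t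
        using H that unfolding a_def b_def by blast
      show "(\<gamma>' has_vector_derivative \<gamma>'' t) (at t within {a..b})" if "t \<in> {a..b}" for t
        using H that unfolding a_def b_def by blast
      show "norm (\<gamma>' t) = 1" if "t \<in> {a..b}" for t
        using H that unfolding a_def b_def by blast
      show "\<gamma> t \<in> S" if "t \<in> {a..b}" for t
        using img that unfolding a_def b_def by blast
      show "\<exists>u w. \<gamma> t = p + u *\<^sub>R nv + w *\<^sub>R (q - p)" if "t \<in> {a..b}" for t
        using img that unfolding a_def b_def by blast
    qed (use ends kL un in auto)
    have "\<bar>(p - q) \<bullet> nv\<bar> \<le> \<kappa> * (si - sj)\<^sup>2 / 2" using R by blast
    also have "\<dots> \<le> \<kappa> * (2 * norm (p - q))\<^sup>2 / 2"
    proof -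
      have "(si - sj)\<^sup>2 \<le> (2 * norm (p - q))\<^sup>2"
        using R by (metis abs_ge_zero power2_abs power_mono)
      then show ?thesis using k0 by (intro divide_right_mono mult_left_mono) auto
    qed
    also have "\<dots> \<le> \<kappa> * (2 * (2 * norm d))\<^sup>2 / 2"
    proof -
      have "(2 * norm (p - q))\<^sup>2 \<le> (2 * (2 * norm d))\<^sup>2"
        using near by (intro power_mono) auto
      then show ?thesis using k0 by (intro divide_right_mono mult_left_mono) auto
    qed
    also have "\<dots> = 8 * \<kappa> * (norm d)\<^sup>2" by (simp add: power2_eq_square)
    finally show ?thesis .
  qed
qed

unbundle no cross3_syntax

theorem mainTheorem4:
  fixes Ss :: "(real^3) set set" and \<kappa> :: real and N :: nat
    and a n :: "nat \<Rightarrow> real^3" and \<pi> :: "(real^3) \<times> (real^3) \<Rightarrow> nat \<Rightarrow> nat"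
    and x :: "(real^3) \<times> (real^3)"
  assumes kappa: "\<kappa> \<ge> 0"
    and fin: "finite Ss" and disj: "disjoint Ss"
    and surf: "\<forall>S\<in>Ss. smooth_surface S \<and> curvature_bounded S \<kappa>"
    and on_surf: "\<forall>i\<in>{1..N}. a i \<in> \<Union>Ss"
    and distinct: "inj_on a {1..N}"
    and normals: "\<forall>i\<in>{1..N}. \<forall>S\<in>Ss. a i \<in> S \<longrightarrow> unit_normal S (a i) (n i)"
    and pi_min: "\<forall>y. \<forall>i\<in>{1..N}. \<pi> y i \<in> {1..N} \<and>
        (\<forall>k\<in>{1..N}. norm (a i + icp_d y (a i) - a (\<pi> y i)) \<le> norm (a i + icp_d y (a i) - a k))"
  shows "(\<forall>i\<in>{1..N}.
            (\<exists>S\<in>Ss. a i \<in> S \<and> a (\<pi> x i) \<in> S \<and> arc_hyp S \<kappa> (a i) (a (\<pi> x i)) (n i)) \<longrightarrow>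
            (a i + icp_d x (a i) - a (\<pi> x i)) \<bullet> n i = icp_d x (a i) \<bullet> n i + (a i - a (\<pi> x i)) \<bullet> n i \<and>
            \<bar>(a i - a (\<pi> x i)) \<bullet> n i\<bar> \<le> 8 * \<kappa> * (norm (icp_d x (a i)))\<^sup>2)
       \<and>
         ((\<forall>i\<in>{1..N}.
            \<exists>S\<in>Ss. a i \<in> S \<and> a (\<pi> x i) \<in> S \<and> arc_hyp S \<kappa> (a i) (a (\<pi> x i)) (n i)) \<longrightarrow>
          \<bar>J_ICP N a n \<pi> x - J_fix N a n x\<bar>
            \<le> (\<Sum>i=1..N. 16 * \<kappa> * norm (icp_d x (a i)) ^ 3 + 64 * \<kappa>\<^sup>2 * norm (icp_d x (a i)) ^ 4))"
proof -
  have eqn: "(a i + icp_d x (a i) - a (\<pi> x i)) \<bullet> n i = icp_d x (a i) \<bullet> n i + (a i - a (\<pi> x i)) \<bullet> n i" for i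
    by (simp add: inner_diff_left inner_add_left)
  have near: "norm (a i - a (\<pi> x i)) \<le> 2 * norm (icp_d x (a i))" if iN: "i \<in> {1..N}" for i
  proof -
    have "norm (a i + icp_d x (a i) - a (\<pi> x i)) \<le> norm (a i + icp_d x (a i) - a i)"
      using pi_min iN by blast
    then have h: "norm (a i + icp_d x (a i) - a (\<pi> x i)) \<le> norm (icp_d x (a i))" by simp
    have "a i - a (\<pi> x i) = (a i + icp_d x (a i) - a (\<pi> x i)) - icp_d x (a i)" by simp
    then have "norm (a i - a (\<pi> x i)) \<le> norm (a i + icp_d x (a i) - a (\<pi> x i)) + norm (icp_d x (a i))"
      by (metis norm_triangle_ineq4)
    then show ?thesis using h by linarith
  qed
  have bnd: "\<bar>(a i - a (\<pi> x i)) \<bullet> n i\<bar> \<le> 8 * \<kappa> * (norm (icp_d x (a i)))\<^sup>2 \<and> norm (n i) = 1"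
    if iN: "i \<in> {1..N}" and ex: "\<exists>S\<in>Ss. a i \<in> S \<and> a (\<pi> x i) \<in> S \<and> arc_hyp S \<kappa> (a i) (a (\<pi> x i)) (n i)" for i
  proof -
    obtain S where S: "S \<in> Ss" "a i \<in> S" "arc_hyp S \<kappa> (a i) (a (\<pi> x i)) (n i)" using ex by blast
    have un: "unit_normal S (a i) (n i)" using normals iN S by blast
    have sS: "smooth_surface S" "curvature_bounded S \<kappa>" using surf S(1) by auto
    have "\<bar>(a i - a (\<pi> x i)) \<bullet> n i\<bar> \<le> 8 * \<kappa> * (norm (icp_d x (a i)))\<^sup>2"
      by (rule per_i[OF sS kappa S(2) un S(3) near[OF iN]])
    moreover have "norm (n i) = 1" using un unfolding unit_normal_def by blast
    ultimately show ?thesis by blast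
  qed
  show ?thesis
  proof (intro conjI ballI impI)
    fix i assume "i \<in> {1..N}" "\<exists>S\<in>Ss. a i \<in> S \<and> a (\<pi> x i) \<in> S \<and> arc_hyp S \<kappa> (a i) (a (\<pi> x i)) (n i)"
    then show "(a i + icp_d x (a i) - a (\<pi> x i)) \<bullet> n i = icp_d x (a i) \<bullet> n i + (a i - a (\<pi> x i)) \<bullet> n i"
      "\<bar>(a i - a (\<pi> x i)) \<bullet> n i\<bar> \<le> 8 * \<kappa> * (norm (icp_d x (a i)))\<^sup>2"
      using eqn bnd by blast+
  next
    assume all: "\<forall>i\<in>{1..N}. \<exists>S\<in>Ss. a i \<in> S \<and> a (\<pi> x i) \<in> S \<and> arc_hyp S \<kappa> (a i) (a (\<pi> x i)) (n i)"
    have each: "\<bar>((a i + icp_d x (a i) - a (\<pi> x i)) \<bullet> n i)\<^sup>2 - (icp_d x (a i) \<bullet> n i)\<^sup>2\<bar>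
        \<le> 16 * \<kappa> * norm (icp_d x (a i)) ^ 3 + 64 * \<kappa>\<^sup>2 * norm (icp_d x (a i)) ^ 4" if iN: "i \<in> {1..N}" for i
    proof -
      define D where "D = norm (icp_d x (a i))"
      define u where "u = icp_d x (a i) \<bullet> n i"
      define \<psi> where "\<psi> = (a i - a (\<pi> x i)) \<bullet> n i"
      have b: "\<bar>\<psi>\<bar> \<le> 8 * \<kappa> * D\<^sup>2" "norm (n i) = 1" using bnd[OF iN] all iN by (auto simp: \<psi>_def D_def)
      have uD: "\<bar>u\<bar> \<le> D" using Cauchy_Schwarz_ineq2[of "icp_d x (a i)" "n i"] b(2) by (simp add: u_def D_def)
      have D0: "D \<ge> 0" by (simp add: D_def)
      have "((a i + icp_d x (a i) - a (\<pi> x i)) \<bullet> n i)\<^sup>2 - (icp_d x (a i) \<bullet> n i)\<^sup>2 = 2 * u * \<psi> + \<psi>\<^sup>2"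
        unfolding eqn u_def[symmetric] \<psi>_def[symmetric] by (simp add: power2_eq_square algebra_simps)
      also have "\<bar>\<dots>\<bar> \<le> 2 * \<bar>u\<bar> * \<bar>\<psi>\<bar> + \<bar>\<psi>\<bar>\<^sup>2" 
        by (rule order_trans[OF abs_triangle_ineq]) (simp add: abs_mult power2_abs)
      also have "\<dots> \<le> 2 * D * (8 * \<kappa> * D\<^sup>2) + (8 * \<kappa> * D\<^sup>2)\<^sup>2"
      proof -
        have "2 * \<bar>u\<bar> * \<bar>\<psi>\<bar> \<le> 2 * D * (8 * \<kappa> * D\<^sup>2)"
          using uD b(1) by (intro mult_mono) auto
        moreover have "\<bar>\<psi>\<bar>\<^sup>2 \<le> (8 * \<kappa> * D\<^sup>2)\<^sup>2" using b(1) by (intro power_mono) auto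
        ultimately show ?thesis by linarith
      qed
      also have "\<dots> = 16 * \<kappa> * D ^ 3 + 64 * \<kappa>\<^sup>2 * D ^ 4" by (simp add: power2_eq_square power3_eq_cube algebra_simps) (simp add: power_def)
      finally show ?thesis unfolding D_def .
    qed
    have "\<bar>J_ICP N a n \<pi> x - J_fix N a n x\<bar> = \<bar>\<Sum>i=1..N. ((a i + icp_d x (a i) - a (\<pi> x i)) \<bullet> n i)\<^sup>2 - (icp_d x (a i) \<bullet> n i)\<^sup>2\<bar>"
      by (simp add: J_ICP_def J_fix_def sum_subtractf)
    also have "\<dots> \<le> (\<Sum>i=1..N. \<bar>((a i + icp_d x (a i) - a (\<pi> x i)) \<bullet> n i)\<^sup>2 - (icp_d x (a i) \<bullet> n i)\<^sup>2\<bar>)"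
      by (rule sum_abs)
    also have "\<dots> \<le> (\<Sum>i=1..N. 16 * \<kappa> * norm (icp_d x (a i)) ^ 3 + 64 * \<kappa>\<^sup>2 * norm (icp_d x (a i)) ^ 4)"
      by (rule sum_mono) (rule each, simp)
    finally show "\<bar>J_ICP N a n \<pi> x - J_fix N a n x\<bar> \<le> (\<Sum>i=1..N. 16 * \<kappa> * norm (icp_d x (a i)) ^ 3 + 64 * \<kappa>\<^sup>2 * norm (icp_d x (a i)) ^ 4)" .
  qed
qed

end
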